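(* Let $E$ be a contact Riemannian Lie algebroid with associated almost contact Riemannian structure $(F_E,\xi,\eta,g_E)$, let $\nabla$ be the Levi-Civita connection of $g_E$ and $N_E^{(3)}=\frac12\mathcal{L}_\xi F_E$. Then for all $s,s_1,s_2\in\Gamma(E)$: (i) $g_E(N_E^{(3)}(s_1),s_2)=g_E(s_1,N_E^{(3)}(s_2))$; (ii) $\nabla_s\xi=-F_E(s)-F_E(N_E^{(3)}(s))$; (iii) $F_E\circ N_E^{(3)}=-N_E^{(3)}\circ F_E$; (iv) $\operatorname{trace}N_E^{(3)}=0$, $\operatorname{trace}(N_E^{(3)}\circ F_E)=0$, $N_E^{(3)}(\xi)=0$, $\eta(N_E^{(3)}(s))=0$; (v) $(\nabla_{s_1}F_E)(s_2)+(\nabla_{F_E(s_1)}F_E)F_E(s_2)=2g_E(s_1,s_2)\xi-\eta(s_2)\big(s_1+N_E^{(3)}(s_1)+\eta(s_1)\xi\big)$.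
   Context: A Lie algebroid $(E,\rho_E,[\cdot,\cdot]_E)$ over $M$ is a vector bundle with anchor $\rho_E:E\to TM$ and Lie bracket on $\Gamma(E)$ with $[s_1,fs_2]_E=f[s_1,s_2]_E+\rho_E(s_1)(f)s_2$. For a 1-form $\eta$, $(d_E\eta)(s_1,s_2)=\frac12\{\rho_E(s_1)(\eta(s_2))-\rho_E(s_2)(\eta(s_1))-\eta([s_1,s_2]_E)\}$. For $E$ of rank $2m+1$, an almost contact Riemannian structure $(F_E,\xi,\eta,g_E)$: endomorphism $F_E$, $\xi\in\Gamma(E)$, $\eta\in\Gamma(E^* )$, bundle metric $g_E$ with $F_E^2=-I_E+\eta\otimes\xi$, $\eta(\xi)=1$, $g_E(F_Es_1,F_Es_2)=g_E(s_1,s_2)-\eta(s_1)\eta(s_2)$; fundamental form $\Omega_E(s_1,s_2)=g_E(s_1,F_Es_2)$. $E$ is contact Riemannian if also $\eta\wedge(d_E\eta)^m$ vanishes nowhere and $d_E\eta=\Omega_E$. $(\mathcal{L}_\xi F_E)(s)=[\xi,F_Es]_E-F_E[\xi,s]_E$. The Levi-Civita connection $\nabla$ is the unique $E$-connection ($\nabla_{fs}s'=f\nabla_ss'$, $\nabla_s(fs')=f\nabla_ss'+\rho_E(s)(f)s'$) that is torsion-free ($\nabla_{s_1}s_2-\nabla_{s_2}s_1=[s_1,s_2]_E$) and metric ($\rho_E(s)(g_E(s_1,s_2))=g_E(\nabla_ss_1,s_2)+g_E(s_1,\nabla_ss_2)$); $(\nabla_sF_E)s'=\nabla_s(F_Es')-F_E(\nabla_ss')$.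 *)

theory Defs
  imports Complex_Main "HOL-Combinatorics.Permutations"
begin

text \<open>M is the type 'm of base points. The vector bundle E is given by its fibres
E x, finite-dimensional subspaces of an ambient real vector space 'v (every vector bundle
over a manifold embeds in a trivial bundle). C is the algebra of smooth functions on M,
Gamma the C-module of smooth sections (functions 'm => 'v with values in the fibres).\<close>

definition sm :: "('m \<Rightarrow> real) \<Rightarrow> ('m \<Rightarrow> 'v::real_vector) \<Rightarrow> 'm \<Rightarrow> 'v" where
  "sm f s = (\<lambda>x. f x *\<^sub>R s x)"

definition sadd :: "('m \<Rightarrow> 'v::real_vector) \<Rightarrow> ('m \<Rightarrow> 'v) \<Rightarrow> 'm \<Rightarrow> 'v" where
  "sadd s t = (\<lambda>x. s x + t x)"

definition fapp :: "('m \<Rightarrow> 'v \<Rightarrow> 'w) \<Rightarrow> ('m \<Rightarrow> 'v) \<Rightarrow> 'm \<Rightarrow> 'w" where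
  "fapp T s = (\<lambda>x. T x (s x))"

definition lin_on :: "'v::real_vector set \<Rightarrow> ('v \<Rightarrow> 'w::real_vector) \<Rightarrow> bool" where
  "lin_on V f \<longleftrightarrow> (\<forall>u\<in>V. \<forall>v\<in>V. \<forall>a. f (a *\<^sub>R u + v) = a *\<^sub>R f u + f v)"

text \<open>Smooth vector bundle of rank r with algebra of smooth functions C and module of smooth
sections Gamma; the last clause says Gamma is of finite type (sections are combinations of
finitely many global sections with smooth, fibrewise linear coefficients), as holds for
every smooth vector bundle over a manifold.\<close>
definition vector_bundle ::
  "('m \<Rightarrow> 'v::real_vector set) \<Rightarrow> nat \<Rightarrow> ('m \<Rightarrow> real) set \<Rightarrow> ('m \<Rightarrow> 'v) set \<Rightarrow> bool" where
  "vector_bundle E r C \<Gamma> \<longleftrightarrow>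
     (\<forall>x. real_vector.subspace (E x) \<and> real_vector.dim (E x) = r) \<and>
     (\<forall>c. (\<lambda>x. c) \<in> C) \<and>
     (\<forall>f\<in>C. \<forall>h\<in>C. (\<lambda>x. f x + h x) \<in> C \<and> (\<lambda>x. f x * h x) \<in> C) \<and>
     (\<forall>s\<in>\<Gamma>. \<forall>x. s x \<in> E x) \<and>
     (\<lambda>x. 0) \<in> \<Gamma> \<and>
     (\<forall>s\<in>\<Gamma>. \<forall>t\<in>\<Gamma>. sadd s t \<in> \<Gamma>) \<and>
     (\<forall>f\<in>C. \<forall>s\<in>\<Gamma>. sm f s \<in> \<Gamma>) \<and>
     (\<forall>x. \<forall>v\<in>E x. \<exists>s\<in>\<Gamma>. s x = v) \<and>
     (\<exists>k e (\<theta> :: nat \<Rightarrow> 'm \<Rightarrow> 'v \<Rightarrow> real). (\<forall>i<k. e i \<in> \<Gamma> \<and> (\<forall>x. lin_on (E x) (\<theta> i x)) \<and>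
                        (\<forall>s\<in>\<Gamma>. fapp (\<theta> i) s \<in> C)) \<and>
               (\<forall>s\<in>\<Gamma>. s = (\<lambda>x. \<Sum>i<k. \<theta> i x (s x) *\<^sub>R e i x)))"

definition lie_algebroid ::
  "('m \<Rightarrow> 'v::real_vector set) \<Rightarrow> nat \<Rightarrow> ('m \<Rightarrow> real) set \<Rightarrow> ('m \<Rightarrow> 'v) set \<Rightarrow>
   (('m \<Rightarrow> 'v) \<Rightarrow> ('m \<Rightarrow> real) \<Rightarrow> ('m \<Rightarrow> real)) \<Rightarrow>
   (('m \<Rightarrow> 'v) \<Rightarrow> ('m \<Rightarrow> 'v) \<Rightarrow> ('m \<Rightarrow> 'v)) \<Rightarrow> bool" where
  "lie_algebroid E r C \<Gamma> \<rho> br \<longleftrightarrow>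
     vector_bundle E r C \<Gamma> \<and>
     (\<forall>s\<in>\<Gamma>. \<forall>f\<in>C. \<rho> s f \<in> C) \<and>
     (\<forall>s\<in>\<Gamma>. \<forall>f\<in>C. \<forall>h\<in>C.
        \<rho> s (\<lambda>x. f x + h x) = (\<lambda>x. \<rho> s f x + \<rho> s h x) \<and>
        \<rho> s (\<lambda>x. f x * h x) = (\<lambda>x. f x * \<rho> s h x + h x * \<rho> s f x)) \<and>
     (\<forall>s\<in>\<Gamma>. \<forall>f\<in>C. \<forall>c. \<rho> s (\<lambda>x. c * f x) = (\<lambda>x. c * \<rho> s f x)) \<and>
     (\<forall>s\<in>\<Gamma>. \<forall>t\<in>\<Gamma>. \<forall>f\<in>C. \<forall>h\<in>C.
        \<rho> (sadd s t) h = (\<lambda>x. \<rho> s h x + \<rho> t h x) \<and>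
        \<rho> (sm f s) h = (\<lambda>x. f x * \<rho> s h x)) \<and>
     (\<forall>s\<in>\<Gamma>. \<forall>t\<in>\<Gamma>. br s t \<in> \<Gamma>) \<and>
     (\<forall>s\<in>\<Gamma>. \<forall>t\<in>\<Gamma>. \<forall>u\<in>\<Gamma>.
        br (sadd s t) u = sadd (br s u) (br t u) \<and> br s (sadd t u) = sadd (br s t) (br s u)) \<and>
     (\<forall>s\<in>\<Gamma>. \<forall>t\<in>\<Gamma>. \<forall>c.
        br (sm (\<lambda>x. c) s) t = sm (\<lambda>x. c) (br s t) \<and> br s (sm (\<lambda>x. c) t) = sm (\<lambda>x. c) (br s t)) \<and>
     (\<forall>s\<in>\<Gamma>. \<forall>t\<in>\<Gamma>. br s t = (\<lambda>x. - br t s x)) \<and>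
     (\<forall>s\<in>\<Gamma>. \<forall>t\<in>\<Gamma>. \<forall>u\<in>\<Gamma>.
        (\<lambda>x. br s (br t u) x + br t (br u s) x + br u (br s t) x) = (\<lambda>x. 0)) \<and>
     (\<forall>s\<in>\<Gamma>. \<forall>t\<in>\<Gamma>. \<forall>f\<in>C. br s (sm f t) = sadd (sm f (br s t)) (sm (\<rho> s f) t))"

definition almost_contact_riemannian ::
  "('m \<Rightarrow> 'v::real_vector set) \<Rightarrow> ('m \<Rightarrow> real) set \<Rightarrow> ('m \<Rightarrow> 'v) set \<Rightarrow>
   ('m \<Rightarrow> 'v \<Rightarrow> 'v) \<Rightarrow> ('m \<Rightarrow> 'v) \<Rightarrow> ('m \<Rightarrow> 'v \<Rightarrow> real) \<Rightarrow> ('m \<Rightarrow> 'v \<Rightarrow> 'v \<Rightarrow> real) \<Rightarrow> bool" where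
  "almost_contact_riemannian E C \<Gamma> F \<xi> \<eta> g \<longleftrightarrow>
     (\<forall>x. lin_on (E x) (F x) \<and> (\<forall>v\<in>E x. F x v \<in> E x) \<and> \<xi> x \<in> E x \<and> lin_on (E x) (\<eta> x)) \<and>
     (\<forall>s\<in>\<Gamma>. fapp F s \<in> \<Gamma> \<and> fapp \<eta> s \<in> C) \<and> \<xi> \<in> \<Gamma> \<and>
     (\<forall>x. (\<forall>u\<in>E x. \<forall>v\<in>E x. g x u v = g x v u) \<and> (\<forall>w\<in>E x. lin_on (E x) (\<lambda>v. g x v w)) \<and>
          (\<forall>v\<in>E x. v \<noteq> 0 \<longrightarrow> g x v v > 0)) \<and>
     (\<forall>s\<in>\<Gamma>. \<forall>t\<in>\<Gamma>. (\<lambda>x. g x (s x) (t x)) \<in> C) \<and>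
     (\<forall>x. \<forall>v\<in>E x. F x (F x v) = - v + \<eta> x v *\<^sub>R \<xi> x) \<and>
     (\<forall>x. \<eta> x (\<xi> x) = 1) \<and>
     (\<forall>x. \<forall>u\<in>E x. \<forall>v\<in>E x. g x (F x u) (F x v) = g x u v - \<eta> x u * \<eta> x v)"

text \<open>d_E eta, with the paper's factor 1/2\<close>
definition dE1 ::
  "(('m \<Rightarrow> 'v) \<Rightarrow> ('m \<Rightarrow> real) \<Rightarrow> ('m \<Rightarrow> real)) \<Rightarrow> (('m \<Rightarrow> 'v) \<Rightarrow> ('m \<Rightarrow> 'v) \<Rightarrow> ('m \<Rightarrow> 'v)) \<Rightarrow>
   ('m \<Rightarrow> 'v \<Rightarrow> real) \<Rightarrow> ('m \<Rightarrow> 'v) \<Rightarrow> ('m \<Rightarrow> 'v) \<Rightarrow> 'm \<Rightarrow> real" where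
  "dE1 \<rho> br \<eta> s t = (\<lambda>x. (1/2) * (\<rho> s (fapp \<eta> t) x - \<rho> t (fapp \<eta> s) x - \<eta> x (br s t x)))"

definition fund_form :: "('m \<Rightarrow> 'v \<Rightarrow> 'v \<Rightarrow> real) \<Rightarrow> ('m \<Rightarrow> 'v \<Rightarrow> 'v) \<Rightarrow> ('m \<Rightarrow> 'v) \<Rightarrow> ('m \<Rightarrow> 'v) \<Rightarrow> 'm \<Rightarrow> real" where
  "fund_form g F s t = (\<lambda>x. g x (s x) (F x (t x)))"

text \<open>(eta wedge (d_E eta)^n)(s_0,...,s_2n), up to a nonzero constant normalisation factor
(irrelevant for vanishing).\<close>
definition contact_top_form ::
  "(('m \<Rightarrow> 'v) \<Rightarrow> ('m \<Rightarrow> real) \<Rightarrow> ('m \<Rightarrow> real)) \<Rightarrow> (('m \<Rightarrow> 'v) \<Rightarrow> ('m \<Rightarrow> 'v) \<Rightarrow> ('m \<Rightarrow> 'v)) \<Rightarrow>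
   ('m \<Rightarrow> 'v \<Rightarrow> real) \<Rightarrow> nat \<Rightarrow> (nat \<Rightarrow> 'm \<Rightarrow> 'v) \<Rightarrow> 'm \<Rightarrow> real" where
  "contact_top_form \<rho> br \<eta> n s = (\<lambda>x.
     \<Sum>p | p permutes {..2*n}. of_int (sign p) * \<eta> x (s (p 0) x) *
        (\<Prod>j\<in>{1..n}. dE1 \<rho> br \<eta> (s (p (2*j-1))) (s (p (2*j))) x))"

definition contact_riemannian_lie_algebroid ::
  "('m \<Rightarrow> 'v::real_vector set) \<Rightarrow> ('m \<Rightarrow> real) set \<Rightarrow> ('m \<Rightarrow> 'v) set \<Rightarrow>
   (('m \<Rightarrow> 'v) \<Rightarrow> ('m \<Rightarrow> real) \<Rightarrow> ('m \<Rightarrow> real)) \<Rightarrow> (('m \<Rightarrow> 'v) \<Rightarrow> ('m \<Rightarrow> 'v) \<Rightarrow> ('m \<Rightarrow> 'v)) \<Rightarrow>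
   nat \<Rightarrow> ('m \<Rightarrow> 'v \<Rightarrow> 'v) \<Rightarrow> ('m \<Rightarrow> 'v) \<Rightarrow> ('m \<Rightarrow> 'v \<Rightarrow> real) \<Rightarrow> ('m \<Rightarrow> 'v \<Rightarrow> 'v \<Rightarrow> real) \<Rightarrow> bool" where
  "contact_riemannian_lie_algebroid E C \<Gamma> \<rho> br n F \<xi> \<eta> g \<longleftrightarrow>
     lie_algebroid E (2*n+1) C \<Gamma> \<rho> br \<and>
     almost_contact_riemannian E C \<Gamma> F \<xi> \<eta> g \<and>
     (\<forall>x. \<exists>s. (\<forall>i\<le>2*n. s i \<in> \<Gamma>) \<and> contact_top_form \<rho> br \<eta> n s x \<noteq> 0) \<and>
     (\<forall>s\<in>\<Gamma>. \<forall>t\<in>\<Gamma>. dE1 \<rho> br \<eta> s t = fund_form g F s t)"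

definition levi_civita ::
  "('m \<Rightarrow> real) set \<Rightarrow> ('m \<Rightarrow> 'v::real_vector) set \<Rightarrow>
   (('m \<Rightarrow> 'v) \<Rightarrow> ('m \<Rightarrow> real) \<Rightarrow> ('m \<Rightarrow> real)) \<Rightarrow> (('m \<Rightarrow> 'v) \<Rightarrow> ('m \<Rightarrow> 'v) \<Rightarrow> ('m \<Rightarrow> 'v)) \<Rightarrow>
   ('m \<Rightarrow> 'v \<Rightarrow> 'v \<Rightarrow> real) \<Rightarrow> (('m \<Rightarrow> 'v) \<Rightarrow> ('m \<Rightarrow> 'v) \<Rightarrow> ('m \<Rightarrow> 'v)) \<Rightarrow> bool" where
  "levi_civita C \<Gamma> \<rho> br g nab \<longleftrightarrow>
     (\<forall>s\<in>\<Gamma>. \<forall>t\<in>\<Gamma>. nab s t \<in> \<Gamma>) \<and>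
     (\<forall>s\<in>\<Gamma>. \<forall>t\<in>\<Gamma>. \<forall>u\<in>\<Gamma>.
        nab (sadd s t) u = sadd (nab s u) (nab t u) \<and> nab s (sadd t u) = sadd (nab s t) (nab s u)) \<and>
     (\<forall>f\<in>C. \<forall>s\<in>\<Gamma>. \<forall>t\<in>\<Gamma>.
        nab (sm f s) t = sm f (nab s t) \<and> nab s (sm f t) = sadd (sm f (nab s t)) (sm (\<rho> s f) t)) \<and>
     (\<forall>s\<in>\<Gamma>. \<forall>t\<in>\<Gamma>. (\<lambda>x. nab s t x - nab t s x) = br s t) \<and>
     (\<forall>s\<in>\<Gamma>. \<forall>s1\<in>\<Gamma>. \<forall>s2\<in>\<Gamma>.
        \<rho> s (\<lambda>x. g x (s1 x) (s2 x)) = (\<lambda>x. g x (nab s s1 x) (s2 x) + g x (s1 x) (nab s s2 x)))"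

text \<open>N^(3) = 1/2 L_xi F, acting on sections\<close>
definition N3 :: "(('m \<Rightarrow> 'v) \<Rightarrow> ('m \<Rightarrow> 'v) \<Rightarrow> ('m \<Rightarrow> 'v::real_vector)) \<Rightarrow> ('m \<Rightarrow> 'v \<Rightarrow> 'v) \<Rightarrow> ('m \<Rightarrow> 'v) \<Rightarrow>
    ('m \<Rightarrow> 'v) \<Rightarrow> 'm \<Rightarrow> 'v" where
  "N3 br F \<xi> s = (\<lambda>x. (1/2) *\<^sub>R (br \<xi> (fapp F s) x - F x (br \<xi> s x)))"

definition covF :: "(('m \<Rightarrow> 'v) \<Rightarrow> ('m \<Rightarrow> 'v) \<Rightarrow> ('m \<Rightarrow> 'v::real_vector)) \<Rightarrow> ('m \<Rightarrow> 'v \<Rightarrow> 'v) \<Rightarrow>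
    ('m \<Rightarrow> 'v) \<Rightarrow> ('m \<Rightarrow> 'v) \<Rightarrow> 'm \<Rightarrow> 'v" where
  "covF nab F s t = (\<lambda>x. nab s (fapp F t) x - F x (nab s t x))"

text \<open>The fibre endomorphism at x induced by a (C-linear) operator T on sections.\<close>
definition pw :: "('m \<Rightarrow> 'v) set \<Rightarrow> (('m \<Rightarrow> 'v) \<Rightarrow> 'm \<Rightarrow> 'v) \<Rightarrow> 'm \<Rightarrow> 'v \<Rightarrow> 'v" where
  "pw \<Gamma> T x v = T (SOME s. s \<in> \<Gamma> \<and> s x = v) x"

definition fiber_trace :: "'v::real_vector set \<Rightarrow> ('v \<Rightarrow> 'v) \<Rightarrow> real" where
  "fiber_trace V T = (let B = (SOME B. real_vector.independent B \<and> real_vector.span B = V)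
     in \<Sum>b\<in>B. real_vector.representation B (T b) b)"

end

theory Submission
  imports Defs
begin

locale CR =
  fixes E :: "'m \<Rightarrow> 'v::real_vector set" and C :: "('m \<Rightarrow> real) set"
    and \<Gamma> :: "('m \<Rightarrow> 'v) set" and \<rho> :: "('m \<Rightarrow> 'v) \<Rightarrow> ('m \<Rightarrow> real) \<Rightarrow> ('m \<Rightarrow> real)"
    and br :: "('m \<Rightarrow> 'v) \<Rightarrow> ('m \<Rightarrow> 'v) \<Rightarrow> ('m \<Rightarrow> 'v)" and n :: nat
    and F :: "'m \<Rightarrow> 'v \<Rightarrow> 'v" and \<xi> :: "'m \<Rightarrow> 'v" and \<eta> :: "'m \<Rightarrow> 'v \<Rightarrow> real"
    and g :: "'m \<Rightarrow> 'v \<Rightarrow> 'v \<Rightarrow> real"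
    and nab :: "('m \<Rightarrow> 'v) \<Rightarrow> ('m \<Rightarrow> 'v) \<Rightarrow> ('m \<Rightarrow> 'v)"
  assumes crla: "contact_riemannian_lie_algebroid E C \<Gamma> \<rho> br n F \<xi> \<eta> g"
    and lc: "levi_civita C \<Gamma> \<rho> br g nab"
begin

lemma LA: "lie_algebroid E (2*n+1) C \<Gamma> \<rho> br"
  using crla unfolding contact_riemannian_lie_algebroid_def by (elim conjE) blast
lemma VB: "vector_bundle E (2*n+1) C \<Gamma>"
  using LA unfolding lie_algebroid_def by (elim conjE) blast
lemma AC: "almost_contact_riemannian E C \<Gamma> F \<xi> \<eta> g"
  using crla unfolding contact_riemannian_lie_algebroid_def by (elim conjE) blast
lemma dEq: "s \<in> \<Gamma> \<Longrightarrow> t \<in> \<Gamma> \<Longrightarrow> dE1 \<rho> br \<eta> s t = fund_form g F s t"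
  using crla unfolding contact_riemannian_lie_algebroid_def by (elim conjE) metis

lemma subE: "real_vector.subspace (E x)"
  using VB unfolding vector_bundle_def by (elim conjE) blast
lemma dimE: "real_vector.dim (E x) = 2*n+1"
  using VB unfolding vector_bundle_def by (elim conjE) blast

lemma Cconst[simp]: "(\<lambda>x. c) \<in> C"
  using VB unfolding vector_bundle_def by (elim conjE) blast

lemma Cadd: "f \<in> C \<Longrightarrow> h \<in> C \<Longrightarrow> (\<lambda>x. f x + h x) \<in> C"
  using VB unfolding vector_bundle_def by (elim conjE) blast

lemma Cmul: "f \<in> C \<Longrightarrow> h \<in> C \<Longrightarrow> (\<lambda>x. f x * h x) \<in> C"
  using VB unfolding vector_bundle_def by (elim conjE) blast

lemma Gin[simp]: "s \<in> \<Gamma> \<Longrightarrow> s x \<in> E x"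
  using VB unfolding vector_bundle_def by (elim conjE) blast

lemma G0[simp]: "(\<lambda>x. 0) \<in> \<Gamma>"
  using VB unfolding vector_bundle_def by (elim conjE) blast

lemma Gadd[simp]: "s \<in> \<Gamma> \<Longrightarrow> t \<in> \<Gamma> \<Longrightarrow> sadd s t \<in> \<Gamma>"
  using VB unfolding vector_bundle_def by (elim conjE) blast

lemma Gsm[simp]: "f \<in> C \<Longrightarrow> s \<in> \<Gamma> \<Longrightarrow> sm f s \<in> \<Gamma>"
  using VB unfolding vector_bundle_def by (elim conjE) blast

lemma Gsurj: "v \<in> E x \<Longrightarrow> \<exists>s\<in>\<Gamma>. s x = v"
  using VB unfolding vector_bundle_def by (elim conjE) blast

lemma ftype: "\<exists>k e (\<theta> :: nat \<Rightarrow> 'm \<Rightarrow> 'v \<Rightarrow> real). (\<forall>i<k. e i \<in> \<Gamma> \<and> (\<forall>x. lin_on (E x) (\<theta> i x)) \<and>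
                        (\<forall>s\<in>\<Gamma>. fapp (\<theta> i) s \<in> C)) \<and>
               (\<forall>s\<in>\<Gamma>. s = (\<lambda>x. \<Sum>i<k. \<theta> i x (s x) *\<^sub>R e i x))"
  using VB unfolding vector_bundle_def by (elim conjE) blast

lemma Ccmul[simp]: "f \<in> C \<Longrightarrow> (\<lambda>x. c * f x) \<in> C"
  using Cmul[of "\<lambda>x. c" f] by simp
lemma Cdiff: "f \<in> C \<Longrightarrow> h \<in> C \<Longrightarrow> (\<lambda>x. f x - h x) \<in> C"
  using Cadd[of f "\<lambda>x. (-1) * h x"] Ccmul[of h "-1"] by simp

lemma rhoC[simp]: "s \<in> \<Gamma> \<Longrightarrow> f \<in> C \<Longrightarrow> \<rho> s f \<in> C"
  using LA unfolding lie_algebroid_def by (elim conjE) blast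

lemma rho_add0: "s \<in> \<Gamma> \<Longrightarrow> f \<in> C \<Longrightarrow> h \<in> C \<Longrightarrow> \<rho> s (\<lambda>x. f x + h x) = (\<lambda>x. \<rho> s f x + \<rho> s h x)"
  using LA unfolding lie_algebroid_def by (elim conjE) metis

lemma rho_mul0: "s \<in> \<Gamma> \<Longrightarrow> f \<in> C \<Longrightarrow> h \<in> C \<Longrightarrow> \<rho> s (\<lambda>x. f x * h x) = (\<lambda>x. f x * \<rho> s h x + h x * \<rho> s f x)"
  using LA unfolding lie_algebroid_def by (elim conjE) metis

lemma rho_cmul0: "s \<in> \<Gamma> \<Longrightarrow> f \<in> C \<Longrightarrow> \<rho> s (\<lambda>x. c * f x) = (\<lambda>x. c * \<rho> s f x)"
  using LA unfolding lie_algebroid_def by (elim conjE) metis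

lemma rho_sadd0: "s \<in> \<Gamma> \<Longrightarrow> t \<in> \<Gamma> \<Longrightarrow> h \<in> C \<Longrightarrow> \<rho> (sadd s t) h = (\<lambda>x. \<rho> s h x + \<rho> t h x)"
  using LA unfolding lie_algebroid_def by (elim conjE) metis

lemma rho_sm0: "s \<in> \<Gamma> \<Longrightarrow> f \<in> C \<Longrightarrow> h \<in> C \<Longrightarrow> \<rho> (sm f s) h = (\<lambda>x. f x * \<rho> s h x)"
  using LA unfolding lie_algebroid_def by (elim conjE) metis

lemma brG[simp]: "s \<in> \<Gamma> \<Longrightarrow> t \<in> \<Gamma> \<Longrightarrow> br s t \<in> \<Gamma>"
  using LA unfolding lie_algebroid_def by (elim conjE) blast

lemma br_sadd1: "s \<in> \<Gamma> \<Longrightarrow> t \<in> \<Gamma> \<Longrightarrow> u \<in> \<Gamma> \<Longrightarrow> br (sadd s t) u = sadd (br s u) (br t u)"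
  using LA unfolding lie_algebroid_def by (elim conjE) metis

lemma br_sadd2: "s \<in> \<Gamma> \<Longrightarrow> t \<in> \<Gamma> \<Longrightarrow> u \<in> \<Gamma> \<Longrightarrow> br s (sadd t u) = sadd (br s t) (br s u)"
  using LA unfolding lie_algebroid_def by (elim conjE) metis

lemma br_anti: "s \<in> \<Gamma> \<Longrightarrow> t \<in> \<Gamma> \<Longrightarrow> br s t = (\<lambda>x. - br t s x)"
  using LA unfolding lie_algebroid_def by (elim conjE) metis

lemma br_jac: "s \<in> \<Gamma> \<Longrightarrow> t \<in> \<Gamma> \<Longrightarrow> u \<in> \<Gamma> \<Longrightarrow>
        (\<lambda>x. br s (br t u) x + br t (br u s) x + br u (br s t) x) = (\<lambda>x. 0)"
  using LA unfolding lie_algebroid_def by (elim conjE) metis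

lemma br_leib: "s \<in> \<Gamma> \<Longrightarrow> t \<in> \<Gamma> \<Longrightarrow> f \<in> C \<Longrightarrow> br s (sm f t) = sadd (sm f (br s t)) (sm (\<rho> s f) t)"
  using LA unfolding lie_algebroid_def by (elim conjE) metis

lemma linF: "lin_on (E x) (F x)"
  using AC unfolding almost_contact_riemannian_def by (elim conjE) blast
lemma FE[simp]: "v \<in> E x \<Longrightarrow> F x v \<in> E x"
  using AC unfolding almost_contact_riemannian_def by (elim conjE) blast
lemma xiE[simp]: "\<xi> x \<in> E x"
  using AC unfolding almost_contact_riemannian_def by (elim conjE) blast

lemma lin\<eta>: "lin_on (E x) (\<eta> x)"
  using AC unfolding almost_contact_riemannian_def by (elim conjE) blast

lemma FG[simp]: "s \<in> \<Gamma> \<Longrightarrow> fapp F s \<in> \<Gamma>"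
  using AC unfolding almost_contact_riemannian_def by (elim conjE) blast
lemma etaC[simp]: "s \<in> \<Gamma> \<Longrightarrow> fapp \<eta> s \<in> C"
  using AC unfolding almost_contact_riemannian_def by (elim conjE) blast

lemma xiG[simp]: "\<xi> \<in> \<Gamma>"
  using AC unfolding almost_contact_riemannian_def by (elim conjE) blast

lemma gsym: "u \<in> E x \<Longrightarrow> v \<in> E x \<Longrightarrow> g x u v = g x v u"
  using AC unfolding almost_contact_riemannian_def by (elim conjE) blast

lemma ling: "w \<in> E x \<Longrightarrow> lin_on (E x) (\<lambda>v. g x v w)"
  using AC unfolding almost_contact_riemannian_def by (elim conjE) blast

lemma gpos: "v \<in> E x \<Longrightarrow> v \<noteq> 0 \<Longrightarrow> g x v v > 0"
  using AC unfolding almost_contact_riemannian_def by (elim conjE) blast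

lemma gC[simp]: "s \<in> \<Gamma> \<Longrightarrow> t \<in> \<Gamma> \<Longrightarrow> (\<lambda>x. g x (s x) (t x)) \<in> C"
  using AC unfolding almost_contact_riemannian_def by (elim conjE) blast

lemma FF: "v \<in> E x \<Longrightarrow> F x (F x v) = - v + \<eta> x v *\<^sub>R \<xi> x"
  using AC unfolding almost_contact_riemannian_def by (elim conjE) metis

lemma etaxi[simp]: "\<eta> x (\<xi> x) = 1"
  using AC unfolding almost_contact_riemannian_def by (elim conjE) metis

lemma gFF: "u \<in> E x \<Longrightarrow> v \<in> E x \<Longrightarrow> g x (F x u) (F x v) = g x u v - \<eta> x u * \<eta> x v"
  using AC unfolding almost_contact_riemannian_def by (elim conjE) metis

lemma nabG[simp]: "s \<in> \<Gamma> \<Longrightarrow> t \<in> \<Gamma> \<Longrightarrow> nab s t \<in> \<Gamma>"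
  using lc unfolding levi_civita_def by (elim conjE) blast

lemma nab_sadd1: "s \<in> \<Gamma> \<Longrightarrow> t \<in> \<Gamma> \<Longrightarrow> u \<in> \<Gamma> \<Longrightarrow> nab (sadd s t) u = sadd (nab s u) (nab t u)"
  using lc unfolding levi_civita_def by (elim conjE) metis

lemma nab_sadd2: "s \<in> \<Gamma> \<Longrightarrow> t \<in> \<Gamma> \<Longrightarrow> u \<in> \<Gamma> \<Longrightarrow> nab s (sadd t u) = sadd (nab s t) (nab s u)"
  using lc unfolding levi_civita_def by (elim conjE) metis

lemma nab_sm1: "f \<in> C \<Longrightarrow> s \<in> \<Gamma> \<Longrightarrow> t \<in> \<Gamma> \<Longrightarrow> nab (sm f s) t = sm f (nab s t)"
  using lc unfolding levi_civita_def by (elim conjE) metis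

lemma nab_sm2: "f \<in> C \<Longrightarrow> s \<in> \<Gamma> \<Longrightarrow> t \<in> \<Gamma> \<Longrightarrow> nab s (sm f t) = sadd (sm f (nab s t)) (sm (\<rho> s f) t)"
  using lc unfolding levi_civita_def by (elim conjE) metis

lemma tors: "s \<in> \<Gamma> \<Longrightarrow> t \<in> \<Gamma> \<Longrightarrow> (\<lambda>x. nab s t x - nab t s x) = br s t"
  using lc unfolding levi_civita_def by (elim conjE) metis

lemma metr: "s \<in> \<Gamma> \<Longrightarrow> s1 \<in> \<Gamma> \<Longrightarrow> s2 \<in> \<Gamma> \<Longrightarrow>
        \<rho> s (\<lambda>x. g x (s1 x) (s2 x)) = (\<lambda>x. g x (nab s s1 x) (s2 x) + g x (s1 x) (nab s s2 x))"
  using lc unfolding levi_civita_def by (elim conjE) metis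


lemma lin_onD: "lin_on V f \<Longrightarrow> real_vector.subspace V \<Longrightarrow> u \<in> V \<Longrightarrow> v \<in> V \<Longrightarrow>
   f (u + v) = f u + f v \<and> f (a *\<^sub>R u) = a *\<^sub>R f u \<and> f 0 = 0"
proof -
  assume l: "lin_on V f" and S: "real_vector.subspace V" and u: "u \<in> V" and v: "v \<in> V"
  have z: "0 \<in> V" using S real_vector.subspace_0 by blast
  have "f (1 *\<^sub>R 0 + 0) = 1 *\<^sub>R f 0 + f 0" using l z unfolding lin_on_def by blast
  hence f0: "f 0 = 0" by simp
  have "f (1 *\<^sub>R u + v) = 1 *\<^sub>R f u + f v" using l u v unfolding lin_on_def by blast
  moreover have "f (a *\<^sub>R u + 0) = a *\<^sub>R f u + f 0" using l u z unfolding lin_on_def by blast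
  ultimately show ?thesis using f0 by simp
qed

lemma Eadd[simp]: "u \<in> E x \<Longrightarrow> v \<in> E x \<Longrightarrow> u + v \<in> E x"
  using subE real_vector.subspace_add by blast
lemma Escale[simp]: "u \<in> E x \<Longrightarrow> a *\<^sub>R u \<in> E x"
  using subE real_vector.subspace_scale by blast
lemma Ezero[simp]: "0 \<in> E x"
  using subE real_vector.subspace_0 by blast
lemma Eneg[simp]: "u \<in> E x \<Longrightarrow> - u \<in> E x"
  using subE real_vector.subspace_neg by blast
lemma Ediff[simp]: "u \<in> E x \<Longrightarrow> v \<in> E x \<Longrightarrow> u - v \<in> E x"
  using subE real_vector.subspace_diff by blast

lemma Fadd: "u \<in> E x \<Longrightarrow> v \<in> E x \<Longrightarrow> F x (u + v) = F x u + F x v"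
  and Fscale: "u \<in> E x \<Longrightarrow> F x (a *\<^sub>R u) = a *\<^sub>R F x u"
  using lin_onD[OF linF subE] by blast+
lemma F0[simp]: "F x 0 = 0" using Fscale[of 0 x 0] by simp
lemma Fneg: "u \<in> E x \<Longrightarrow> F x (- u) = - F x u" using Fscale[of u x "-1"] by simp
lemma Fdiff: "u \<in> E x \<Longrightarrow> v \<in> E x \<Longrightarrow> F x (u - v) = F x u - F x v"
  using Fadd[of u x "-v"] Fneg[of v x] by simp

lemma eadd: "u \<in> E x \<Longrightarrow> v \<in> E x \<Longrightarrow> \<eta> x (u + v) = \<eta> x u + \<eta> x v"
  and escale: "u \<in> E x \<Longrightarrow> \<eta> x (a *\<^sub>R u) = a * \<eta> x u"
  using lin_onD[OF lin\<eta> subE] by auto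
lemma e0[simp]: "\<eta> x 0 = 0" using escale[of 0 x 0] by simp
lemma eneg: "u \<in> E x \<Longrightarrow> \<eta> x (- u) = - \<eta> x u" using escale[of u x "-1"] by simp
lemma ediff: "u \<in> E x \<Longrightarrow> v \<in> E x \<Longrightarrow> \<eta> x (u - v) = \<eta> x u - \<eta> x v"
  using eadd[of u x "-v"] eneg[of v x] by simp

lemma gadd1: "u \<in> E x \<Longrightarrow> v \<in> E x \<Longrightarrow> w \<in> E x \<Longrightarrow> g x (u + v) w = g x u w + g x v w"
  and gscale1: "u \<in> E x \<Longrightarrow> w \<in> E x \<Longrightarrow> g x (a *\<^sub>R u) w = a * g x u w"
  using lin_onD[OF ling subE] by auto
lemma g01[simp]: "w \<in> E x \<Longrightarrow> g x 0 w = 0" using gscale1[of 0 x w 0] by simp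
lemma gneg1: "u \<in> E x \<Longrightarrow> w \<in> E x \<Longrightarrow> g x (- u) w = - g x u w" using gscale1[of u x w "-1"] by simp
lemma gdiff1: "u \<in> E x \<Longrightarrow> v \<in> E x \<Longrightarrow> w \<in> E x \<Longrightarrow> g x (u - v) w = g x u w - g x v w"
  using gadd1[of u x "-v" w] gneg1[of v x w] by simp
lemma gadd2: "u \<in> E x \<Longrightarrow> v \<in> E x \<Longrightarrow> w \<in> E x \<Longrightarrow> g x w (u + v) = g x w u + g x w v"
  using gadd1[of u x v w] gsym[of w x "u+v"] gsym[of w x u] gsym[of w x v] by simp
lemma gscale2: "u \<in> E x \<Longrightarrow> w \<in> E x \<Longrightarrow> g x w (a *\<^sub>R u) = a * g x w u"
  using gscale1[of u x w a] gsym[of w x "a *\<^sub>R u"] gsym[of w x u] by simp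
lemma g02[simp]: "w \<in> E x \<Longrightarrow> g x w 0 = 0" using gscale2[of 0 x w 0] by simp
lemma gneg2: "u \<in> E x \<Longrightarrow> w \<in> E x \<Longrightarrow> g x w (- u) = - g x w u" using gscale2[of u x w "-1"] by simp
lemma gdiff2: "u \<in> E x \<Longrightarrow> v \<in> E x \<Longrightarrow> w \<in> E x \<Longrightarrow> g x w (u - v) = g x w u - g x w v"
  using gadd2[of u x "-v" w] gneg2[of v x w] by simp

lemmas lin_simps = Fadd Fscale Fneg Fdiff eadd escale eneg ediff gadd1 gscale1 gneg1 gdiff1
   gadd2 gscale2 gneg2 gdiff2

end

context CR begin

lemma FG'[simp]: "s \<in> \<Gamma> \<Longrightarrow> (\<lambda>x. F x (s x)) \<in> \<Gamma>" using FG[of s] unfolding fapp_def .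
lemma etaC'[simp]: "s \<in> \<Gamma> \<Longrightarrow> (\<lambda>x. \<eta> x (s x)) \<in> C" using etaC[of s] unfolding fapp_def .
lemma Gadd'[simp]: "s \<in> \<Gamma> \<Longrightarrow> t \<in> \<Gamma> \<Longrightarrow> (\<lambda>x. s x + t x) \<in> \<Gamma>" using Gadd[of s t] unfolding sadd_def .
lemma Gsm'[simp]: "f \<in> C \<Longrightarrow> s \<in> \<Gamma> \<Longrightarrow> (\<lambda>x. f x *\<^sub>R s x) \<in> \<Gamma>" using Gsm[of f s] unfolding sm_def .
lemma Gcsm[simp]: "s \<in> \<Gamma> \<Longrightarrow> (\<lambda>x. c *\<^sub>R s x) \<in> \<Gamma>" using Gsm'[of "\<lambda>x. c" s] by simp
lemma Gneg[simp]: "s \<in> \<Gamma> \<Longrightarrow> (\<lambda>x. - s x) \<in> \<Gamma>" using Gcsm[of s "-1"] by simp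
lemma Gdiff[simp]: "s \<in> \<Gamma> \<Longrightarrow> t \<in> \<Gamma> \<Longrightarrow> (\<lambda>x. s x - t x) \<in> \<Gamma>"
  using Gadd'[of s "\<lambda>x. - t x"] by simp
lemma Cadd'[simp]: "f \<in> C \<Longrightarrow> h \<in> C \<Longrightarrow> (\<lambda>x. f x + h x) \<in> C" by (rule Cadd)
lemma Cmul'[simp]: "f \<in> C \<Longrightarrow> h \<in> C \<Longrightarrow> (\<lambda>x. f x * h x) \<in> C" by (rule Cmul)
lemma Cdiff'[simp]: "f \<in> C \<Longrightarrow> h \<in> C \<Longrightarrow> (\<lambda>x. f x - h x) \<in> C" by (rule Cdiff)
lemma Cneg[simp]: "f \<in> C \<Longrightarrow> (\<lambda>x. - f x) \<in> C" using Ccmul[of f "-1"] by simp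

lemma rho_add: "s \<in> \<Gamma> \<Longrightarrow> f \<in> C \<Longrightarrow> h \<in> C \<Longrightarrow> \<rho> s (\<lambda>x. f x + h x) x = \<rho> s f x + \<rho> s h x"
  using rho_add0[of s f h] by simp
lemma rho_mul: "s \<in> \<Gamma> \<Longrightarrow> f \<in> C \<Longrightarrow> h \<in> C \<Longrightarrow> \<rho> s (\<lambda>x. f x * h x) x = f x * \<rho> s h x + h x * \<rho> s f x"
  using rho_mul0[of s f h] by simp
lemma rho_cmul: "s \<in> \<Gamma> \<Longrightarrow> f \<in> C \<Longrightarrow> \<rho> s (\<lambda>x. c * f x) x = c * \<rho> s f x"
  using rho_cmul0[of s f c] by simp
lemma rho_one: "s \<in> \<Gamma> \<Longrightarrow> \<rho> s (\<lambda>x. 1) x = 0"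
  using rho_mul[of s "\<lambda>x. 1" "\<lambda>x. 1" x] by simp
lemma rho_const[simp]: "s \<in> \<Gamma> \<Longrightarrow> \<rho> s (\<lambda>x. c) x = 0"
  using rho_cmul[of s "\<lambda>x. 1" c x] rho_one[of s x] by simp
lemma rho_neg: "s \<in> \<Gamma> \<Longrightarrow> f \<in> C \<Longrightarrow> \<rho> s (\<lambda>x. - f x) x = - \<rho> s f x"
  using rho_cmul[of s f "-1" x] by simp
lemma rho_diff: "s \<in> \<Gamma> \<Longrightarrow> f \<in> C \<Longrightarrow> h \<in> C \<Longrightarrow> \<rho> s (\<lambda>x. f x - h x) x = \<rho> s f x - \<rho> s h x"
  using rho_add[of s f "\<lambda>x. - h x" x] rho_neg[of s h x] by simp
lemma rho_sadd: "s \<in> \<Gamma> \<Longrightarrow> t \<in> \<Gamma> \<Longrightarrow> h \<in> C \<Longrightarrow> \<rho> (\<lambda>x. s x + t x) h x = \<rho> s h x + \<rho> t h x"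
  using rho_sadd0[of s t h] unfolding sadd_def by simp
lemma rho_sm: "s \<in> \<Gamma> \<Longrightarrow> f \<in> C \<Longrightarrow> h \<in> C \<Longrightarrow> \<rho> (\<lambda>x. f x *\<^sub>R s x) h x = f x * \<rho> s h x"
  using rho_sm0[of s f h] unfolding sm_def by simp

lemma xi_ne0: "\<xi> x \<noteq> 0" by (metis e0 etaxi zero_neq_one)

lemma Fxi[simp]: "F x (\<xi> x) = 0"
proof -
  let ?w = "F x (\<xi> x)"
  have wE: "?w \<in> E x" by simp
  have Fw: "F x ?w = 0" using FF[of "\<xi> x" x] by simp
  have "F x (F x ?w) = - ?w + \<eta> x ?w *\<^sub>R \<xi> x" using FF[OF wE] .
  hence w: "?w = \<eta> x ?w *\<^sub>R \<xi> x" using Fw by simp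
  have "F x ?w = \<eta> x ?w *\<^sub>R ?w" by (subst w, subst Fscale) auto
  hence "\<eta> x ?w *\<^sub>R ?w = 0" using Fw by simp
  hence "\<eta> x ?w *\<^sub>R (\<eta> x ?w *\<^sub>R \<xi> x) = 0" using w by metis
  hence "\<eta> x ?w * \<eta> x ?w = 0" using xi_ne0[of x] by simp
  hence "\<eta> x ?w = 0" by simp
  thus ?thesis using w by simp
qed

lemma eF[simp]: "v \<in> E x \<Longrightarrow> \<eta> x (F x v) = 0"
proof -
  assume v: "v \<in> E x"
  have "F x (F x (F x v)) = - F x v + \<eta> x (F x v) *\<^sub>R \<xi> x" using FF[of "F x v" x] v by simp
  moreover have "F x (F x (F x v)) = - F x v"
    using v by (simp add: FF Fadd Fneg Fscale Fdiff)
  ultimately have "\<eta> x (F x v) *\<^sub>R \<xi> x = 0" by simp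
  thus ?thesis using xi_ne0[of x] by simp
qed

lemma eg: "v \<in> E x \<Longrightarrow> \<eta> x v = g x v (\<xi> x)"
  using gFF[of v x "\<xi> x"] by simp

lemma eg': "v \<in> E x \<Longrightarrow> \<eta> x v = g x (\<xi> x) v"
  using eg gsym by simp

lemma gskew: "u \<in> E x \<Longrightarrow> v \<in> E x \<Longrightarrow> g x (F x u) v = - g x u (F x v)"
proof -
  assume u: "u \<in> E x" and v: "v \<in> E x"
  have "g x (F x u) (F x (F x v)) = g x u (F x v)" using gFF[of u x "F x v"] u v by simp
  moreover have "g x (F x u) (F x (F x v)) = - g x (F x u) v + \<eta> x v * \<eta> x (F x u)"
    using u v by (simp add: FF gadd2 gneg2 gscale2 gdiff2 eg)
  ultimately show ?thesis using u by simp
qed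

lemma nondeg: "w \<in> E x \<Longrightarrow> (\<And>Z. Z \<in> \<Gamma> \<Longrightarrow> g x w (Z x) = 0) \<Longrightarrow> w = 0"
proof -
  assume w: "w \<in> E x" and h: "\<And>Z. Z \<in> \<Gamma> \<Longrightarrow> g x w (Z x) = 0"
  obtain Z where "Z \<in> \<Gamma>" "Z x = w" using Gsurj[OF w] by blast
  hence "g x w w = 0" using h by metis
  thus ?thesis using gpos[OF w] by force
qed

end

context CR begin

lemma brA2: "s \<in> \<Gamma> \<Longrightarrow> t \<in> \<Gamma> \<Longrightarrow> u \<in> \<Gamma> \<Longrightarrow> br s (\<lambda>x. t x + u x) = (\<lambda>x. br s t x + br s u x)"
  using br_sadd2[of s t u] unfolding sadd_def .
lemma brA1: "s \<in> \<Gamma> \<Longrightarrow> t \<in> \<Gamma> \<Longrightarrow> u \<in> \<Gamma> \<Longrightarrow> br (\<lambda>x. s x + t x) u = (\<lambda>x. br s u x + br t u x)"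
  using br_sadd1[of s t u] unfolding sadd_def .
lemma brS2: "f \<in> C \<Longrightarrow> s \<in> \<Gamma> \<Longrightarrow> t \<in> \<Gamma> \<Longrightarrow> br s (\<lambda>x. f x *\<^sub>R t x) = (\<lambda>x. f x *\<^sub>R br s t x + \<rho> s f x *\<^sub>R t x)"
  using br_leib[of s t f] unfolding sadd_def sm_def by simp
lemma brC2: "s \<in> \<Gamma> \<Longrightarrow> t \<in> \<Gamma> \<Longrightarrow> br s (\<lambda>x. c *\<^sub>R t x) = (\<lambda>x. c *\<^sub>R br s t x)"
  using brS2[of "\<lambda>x. c" s t] by simp
lemma brN2: "s \<in> \<Gamma> \<Longrightarrow> t \<in> \<Gamma> \<Longrightarrow> br s (\<lambda>x. - t x) = (\<lambda>x. - br s t x)"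
  using brC2[of s t "-1"] by simp
lemma brD2: "s \<in> \<Gamma> \<Longrightarrow> t \<in> \<Gamma> \<Longrightarrow> u \<in> \<Gamma> \<Longrightarrow> br s (\<lambda>x. t x - u x) = (\<lambda>x. br s t x - br s u x)"
  using brA2[of s t "\<lambda>x. - u x"] brN2[of s u] by simp
lemma br_anti_pt: "s \<in> \<Gamma> \<Longrightarrow> t \<in> \<Gamma> \<Longrightarrow> br s t x = - br t s x"
  using br_anti[of s t] by metis
lemma brS1: "f \<in> C \<Longrightarrow> s \<in> \<Gamma> \<Longrightarrow> t \<in> \<Gamma> \<Longrightarrow> br (\<lambda>x. f x *\<^sub>R s x) t = (\<lambda>x. f x *\<^sub>R br s t x - \<rho> t f x *\<^sub>R s x)"
proof
  fix x assume f: "f \<in> C" and s: "s \<in> \<Gamma>" and t: "t \<in> \<Gamma>"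
  have "br (\<lambda>x. f x *\<^sub>R s x) t x = - br t (\<lambda>x. f x *\<^sub>R s x) x" using f s t by (intro br_anti_pt) simp_all
  also have "\<dots> = - (f x *\<^sub>R br t s x + \<rho> t f x *\<^sub>R s x)" using brS2[OF f t s] by simp
  also have "\<dots> = f x *\<^sub>R br s t x - \<rho> t f x *\<^sub>R s x" using br_anti_pt[OF s t, of x] by (simp add: algebra_simps)
  finally show "br (\<lambda>x. f x *\<^sub>R s x) t x = f x *\<^sub>R br s t x - \<rho> t f x *\<^sub>R s x" .
qed
lemma br_self: "s \<in> \<Gamma> \<Longrightarrow> br s s x = 0"
proof -
  assume s: "s \<in> \<Gamma>"
  have "br s s x = - br s s x" using br_anti_pt[OF s s] .
  hence "(2::real) *\<^sub>R br s s x = 0" by (metis add.inverse_unique add_eq_0_iff scaleR_2)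
  thus ?thesis by simp
qed
lemma br_zero2: "s \<in> \<Gamma> \<Longrightarrow> br s (\<lambda>x. 0) x = 0"
  using brC2[of s s 0] by simp

lemma nabA1: "s \<in> \<Gamma> \<Longrightarrow> t \<in> \<Gamma> \<Longrightarrow> u \<in> \<Gamma> \<Longrightarrow> nab (\<lambda>x. s x + t x) u = (\<lambda>x. nab s u x + nab t u x)"
  using nab_sadd1[of s t u] unfolding sadd_def .
lemma nabA2: "s \<in> \<Gamma> \<Longrightarrow> t \<in> \<Gamma> \<Longrightarrow> u \<in> \<Gamma> \<Longrightarrow> nab s (\<lambda>x. t x + u x) = (\<lambda>x. nab s t x + nab s u x)"
  using nab_sadd2[of s t u] unfolding sadd_def .
lemma nabS1: "f \<in> C \<Longrightarrow> s \<in> \<Gamma> \<Longrightarrow> t \<in> \<Gamma> \<Longrightarrow> nab (\<lambda>x. f x *\<^sub>R s x) t = (\<lambda>x. f x *\<^sub>R nab s t x)"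
  using nab_sm1[of f s t] unfolding sm_def .
lemma nabS2: "f \<in> C \<Longrightarrow> s \<in> \<Gamma> \<Longrightarrow> t \<in> \<Gamma> \<Longrightarrow> nab s (\<lambda>x. f x *\<^sub>R t x) = (\<lambda>x. f x *\<^sub>R nab s t x + \<rho> s f x *\<^sub>R t x)"
  using nab_sm2[of f s t] unfolding sm_def sadd_def .
lemma nabC2: "s \<in> \<Gamma> \<Longrightarrow> t \<in> \<Gamma> \<Longrightarrow> nab s (\<lambda>x. c *\<^sub>R t x) = (\<lambda>x. c *\<^sub>R nab s t x)"
  using nabS2[of "\<lambda>x. c" s t] by simp
lemma nabN2: "s \<in> \<Gamma> \<Longrightarrow> t \<in> \<Gamma> \<Longrightarrow> nab s (\<lambda>x. - t x) = (\<lambda>x. - nab s t x)"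
  using nabC2[of s t "-1"] by simp
lemma nabD2: "s \<in> \<Gamma> \<Longrightarrow> t \<in> \<Gamma> \<Longrightarrow> u \<in> \<Gamma> \<Longrightarrow> nab s (\<lambda>x. t x - u x) = (\<lambda>x. nab s t x - nab s u x)"
  using nabA2[of s t "\<lambda>x. - u x"] nabN2[of s u] by simp
lemma nab_zero2: "s \<in> \<Gamma> \<Longrightarrow> nab s (\<lambda>x. 0) = (\<lambda>x. 0)"
  using nabC2[of s s 0] by simp
lemma tors_pt: "s \<in> \<Gamma> \<Longrightarrow> t \<in> \<Gamma> \<Longrightarrow> br s t x = nab s t x - nab t s x"
  using tors[of s t] by metis
lemma metr_pt: "s \<in> \<Gamma> \<Longrightarrow> s1 \<in> \<Gamma> \<Longrightarrow> s2 \<in> \<Gamma> \<Longrightarrow>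
        \<rho> s (\<lambda>x. g x (s1 x) (s2 x)) x = g x (nab s s1 x) (s2 x) + g x (s1 x) (nab s s2 x)"
  using metr[of s s1 s2] by metis

lemma Enonzero: "\<exists>v\<in>E x. v \<noteq> 0"
proof (rule ccontr)
  assume "\<not> (\<exists>v\<in>E x. v \<noteq> 0)"
  hence Ex: "E x = {0}" by auto
  have "real_vector.dim (E x) = card ({}::'v set)"
    by (rule real_vector.dim_eq_card) (auto simp: Ex real_vector.independent_empty)
  thus False using dimE[of x] by simp
qed

lemma Gnonzero: "\<exists>u\<in>\<Gamma>. u x \<noteq> 0"
  using Enonzero[of x] Gsurj by blast

lemma vec_aux: "(a - b - c) *\<^sub>R (u::'v) = (f *\<^sub>R A + p *\<^sub>R T + (q *\<^sub>R S + a *\<^sub>R u))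
   + (f *\<^sub>R B + q *\<^sub>R (- S) - (p *\<^sub>R T + b *\<^sub>R u)) + (f *\<^sub>R D - c *\<^sub>R u) - f *\<^sub>R (A + B + D)"
  by (simp add: algebra_simps)

lemma anchor: assumes s: "s \<in> \<Gamma>" and t: "t \<in> \<Gamma>" and f: "f \<in> C"
  shows "\<rho> (br s t) f x = \<rho> s (\<rho> t f) x - \<rho> t (\<rho> s f) x"
proof -
  obtain u where u: "u \<in> \<Gamma>" "u x \<noteq> 0" using Gnonzero by blast
  let ?fu = "\<lambda>y. f y *\<^sub>R u y"
  have fu: "?fu \<in> \<Gamma>" using f u by simp
  have J: "br s (br t ?fu) x + br t (br ?fu s) x + br ?fu (br s t) x = 0"
    using br_jac[OF s t fu] by metis
  have J0: "br s (br t u) x + br t (br u s) x + br u (br s t) x = 0"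
    using br_jac[OF s t u(1)] by metis
  have e1: "br t ?fu = (\<lambda>y. f y *\<^sub>R br t u y + \<rho> t f y *\<^sub>R u y)" using brS2 f t u by simp
  have e1': "br s (br t ?fu) x = f x *\<^sub>R br s (br t u) x + \<rho> s f x *\<^sub>R br t u x
            + (\<rho> t f x *\<^sub>R br s u x + \<rho> s (\<rho> t f) x *\<^sub>R u x)"
    unfolding e1 using s t u f by (simp add: brA2 brS2)
  have e2: "br ?fu s = (\<lambda>y. f y *\<^sub>R br u s y - \<rho> s f y *\<^sub>R u y)" using brS1 f s u by simp
  have e2': "br t (br ?fu s) x = f x *\<^sub>R br t (br u s) x + \<rho> t f x *\<^sub>R br u s x
            - (\<rho> s f x *\<^sub>R br t u x + \<rho> t (\<rho> s f) x *\<^sub>R u x)"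
    unfolding e2 using s t u f by (simp add: brD2 brS2)
  have e3: "br ?fu (br s t) x = f x *\<^sub>R br u (br s t) x - \<rho> (br s t) f x *\<^sub>R u x"
    using brS1 f s t u by simp
  have a1: "br u s x = - br s u x" using u s by (intro br_anti_pt) simp_all
  have "(\<rho> s (\<rho> t f) x - \<rho> t (\<rho> s f) x - \<rho> (br s t) f x) *\<^sub>R u x
      = br s (br t ?fu) x + br t (br ?fu s) x + br ?fu (br s t) x
        - f x *\<^sub>R (br s (br t u) x + br t (br u s) x + br u (br s t) x)"
    unfolding e1' e2' e3 a1 by (rule vec_aux)
  also have "\<dots> = 0" using J J0 by simp
  finally show ?thesis using u(2) by simp
qed

end

context CR begin

lemma dE1_pt: "s \<in> \<Gamma> \<Longrightarrow> t \<in> \<Gamma> \<Longrightarrow>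
  (1/2) * (\<rho> s (\<lambda>x. \<eta> x (t x)) x - \<rho> t (\<lambda>x. \<eta> x (s x)) x - \<eta> x (br s t x)) = g x (s x) (F x (t x))"
  using dEq[of s t] unfolding dE1_def fund_form_def fapp_def by metis

lemma Phi_eq: "s \<in> \<Gamma> \<Longrightarrow> t \<in> \<Gamma> \<Longrightarrow>
  (\<lambda>x. g x (s x) (F x (t x))) = (\<lambda>x. (1/2) * (\<rho> s (\<lambda>x. \<eta> x (t x)) x - \<rho> t (\<lambda>x. \<eta> x (s x)) x - \<eta> x (br s t x)))"
  using dE1_pt by simp

lemma rho_lin3: "s \<in> \<Gamma> \<Longrightarrow> f1 \<in> C \<Longrightarrow> f2 \<in> C \<Longrightarrow> f3 \<in> C \<Longrightarrow>
   \<rho> s (\<lambda>x. c * (f1 x - f2 x - f3 x)) x = c * (\<rho> s f1 x - \<rho> s f2 x - \<rho> s f3 x)"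
proof -
  assume a: "s \<in> \<Gamma>" "f1 \<in> C" "f2 \<in> C" "f3 \<in> C"
  have "\<rho> s (\<lambda>x. c * (f1 x - f2 x - f3 x)) x = c * \<rho> s (\<lambda>x. f1 x - f2 x - f3 x) x"
    using a by (intro rho_cmul) simp_all
  also have "\<rho> s (\<lambda>x. f1 x - f2 x - f3 x) x = \<rho> s (\<lambda>x. f1 x - f2 x) x - \<rho> s f3 x"
    using a rho_diff[of s "\<lambda>x. f1 x - f2 x" f3 x] by simp
  also have "\<rho> s (\<lambda>x. f1 x - f2 x) x = \<rho> s f1 x - \<rho> s f2 x" using a rho_diff by simp
  finally show ?thesis .
qed

lemma eta_br_xi: "X \<in> \<Gamma> \<Longrightarrow> \<rho> \<xi> (\<lambda>x. \<eta> x (X x)) x = \<eta> x (br \<xi> X x)"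
proof -
  assume X: "X \<in> \<Gamma>"
  have "(1/2) * (\<rho> \<xi> (\<lambda>x. \<eta> x (X x)) x - \<rho> X (\<lambda>x. \<eta> x (\<xi> x)) x - \<eta> x (br \<xi> X x))
      = g x (\<xi> x) (F x (X x))" using dE1_pt[OF xiG X] .
  moreover have "g x (\<xi> x) (F x (X x)) = 0" using X eg'[of "F x (X x)" x] by simp
  moreover have "\<rho> X (\<lambda>x. \<eta> x (\<xi> x)) x = 0" using X by simp
  ultimately show ?thesis by simp
qed

lemma eta_br_xi_F: "X \<in> \<Gamma> \<Longrightarrow> \<eta> x (br \<xi> (\<lambda>y. F y (X y)) x) = 0"
proof -
  assume X: "X \<in> \<Gamma>"
  have "(\<lambda>x. \<eta> x (F x (X x))) = (\<lambda>x. 0)" using X by simp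
  hence "\<rho> \<xi> (\<lambda>x. \<eta> x (F x (X x))) x = 0" by simp
  thus ?thesis using eta_br_xi[of "\<lambda>y. F y (X y)" x] X by simp
qed

lemma eta_jac: "X \<in> \<Gamma> \<Longrightarrow> Y \<in> \<Gamma> \<Longrightarrow> Z \<in> \<Gamma> \<Longrightarrow>
   \<eta> x (br (br X Y) Z x) + \<eta> x (br (br Y Z) X x) + \<eta> x (br (br Z X) Y x) = 0"
proof -
  assume X: "X \<in> \<Gamma>" and Y: "Y \<in> \<Gamma>" and Z: "Z \<in> \<Gamma>"
  have J: "br Z (br X Y) x + br X (br Y Z) x + br Y (br Z X) x = 0" using br_jac[OF Z X Y] by metis
  have a1: "br (br X Y) Z x = - br Z (br X Y) x" using X Y Z by (intro br_anti_pt) simp_all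
  have a2: "br (br Y Z) X x = - br X (br Y Z) x" using X Y Z by (intro br_anti_pt) simp_all
  have a3: "br (br Z X) Y x = - br Y (br Z X) x" using X Y Z by (intro br_anti_pt) simp_all
  have "\<eta> x (br (br X Y) Z x) + \<eta> x (br (br Y Z) X x) + \<eta> x (br (br Z X) Y x)
     = - \<eta> x (br Z (br X Y) x + br X (br Y Z) x + br Y (br Z X) x)"
    unfolding a1 a2 a3 using X Y Z by (simp add: eadd eneg)
  thus ?thesis using J by simp
qed

lemma dPhi0: assumes X: "X \<in> \<Gamma>" and Y: "Y \<in> \<Gamma>" and Z: "Z \<in> \<Gamma>"
  shows "\<rho> X (\<lambda>x. g x (Y x) (F x (Z x))) x - g x (br X Y x) (F x (Z x))
       + \<rho> Y (\<lambda>x. g x (Z x) (F x (X x))) x - g x (br Y Z x) (F x (X x))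
       + \<rho> Z (\<lambda>x. g x (X x) (F x (Y x))) x - g x (br Z X x) (F x (Y x)) = 0"
proof -
  have r: "\<rho> A (\<lambda>x. g x (B x) (F x (D x))) x = (1/2) * (\<rho> A (\<rho> B (\<lambda>x. \<eta> x (D x))) x
      - \<rho> A (\<rho> D (\<lambda>x. \<eta> x (B x))) x - \<rho> A (\<lambda>x. \<eta> x (br B D x)) x)"
    if "A \<in> \<Gamma>" "B \<in> \<Gamma>" "D \<in> \<Gamma>" for A B D
    unfolding Phi_eq[OF that(2,3)] using that by (intro rho_lin3) simp_all
  have b: "g x (br A B x) (F x (D x)) = (1/2) * (\<rho> A (\<rho> B (\<lambda>x. \<eta> x (D x))) x - \<rho> B (\<rho> A (\<lambda>x. \<eta> x (D x))) x
      - \<rho> D (\<lambda>x. \<eta> x (br A B x)) x - \<eta> x (br (br A B) D x))"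
    if "A \<in> \<Gamma>" "B \<in> \<Gamma>" "D \<in> \<Gamma>" for A B D
    using dE1_pt[of "br A B" D x] anchor[of A B "\<lambda>x. \<eta> x (D x)" x] that by simp
  show ?thesis
    using r[OF X Y Z] r[OF Y Z X] r[OF Z X Y] b[OF X Y Z] b[OF Y Z X] b[OF Z X Y] eta_jac[OF X Y Z, of x]
    by simp
qed

lemma eta_fun: "Y \<in> \<Gamma> \<Longrightarrow> (\<lambda>x. \<eta> x (Y x)) = (\<lambda>x. g x (Y x) (\<xi> x))"
  using eg by simp

lemma dEta_nab: assumes X: "X \<in> \<Gamma>" and Y: "Y \<in> \<Gamma>"
  shows "g x (nab X \<xi> x) (Y x) - g x (nab Y \<xi> x) (X x) = 2 * g x (X x) (F x (Y x))"
proof -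
  have e: "(1/2) * (\<rho> X (\<lambda>x. \<eta> x (Y x)) x - \<rho> Y (\<lambda>x. \<eta> x (X x)) x - \<eta> x (br X Y x)) = g x (X x) (F x (Y x))"
    using dE1_pt[OF X Y] .
  have r1: "\<rho> X (\<lambda>x. \<eta> x (Y x)) x = g x (nab X Y x) (\<xi> x) + g x (Y x) (nab X \<xi> x)"
    unfolding eta_fun[OF Y] using metr_pt X Y by simp
  have r2: "\<rho> Y (\<lambda>x. \<eta> x (X x)) x = g x (nab Y X x) (\<xi> x) + g x (X x) (nab Y \<xi> x)"
    unfolding eta_fun[OF X] using metr_pt X Y by simp
  have r3: "\<eta> x (br X Y x) = g x (nab X Y x) (\<xi> x) - g x (nab Y X x) (\<xi> x)"
    unfolding tors_pt[OF X Y] using X Y by (simp add: ediff eg gdiff1)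
  have s1: "g x (Y x) (nab X \<xi> x) = g x (nab X \<xi> x) (Y x)" using X Y gsym by simp
  have s2: "g x (X x) (nab Y \<xi> x) = g x (nab Y \<xi> x) (X x)" using X Y gsym by simp
  show ?thesis using e r1 r2 r3 s1 s2 by simp
qed

lemma Lxi: assumes X: "X \<in> \<Gamma>" and Y: "Y \<in> \<Gamma>"
  shows "\<rho> \<xi> (\<lambda>x. g x (X x) (Y x)) x - g x (br \<xi> X x) (Y x) - g x (X x) (br \<xi> Y x)
     = g x (nab X \<xi> x) (Y x) + g x (nab Y \<xi> x) (X x)"
proof -
  have "\<rho> \<xi> (\<lambda>x. g x (X x) (Y x)) x = g x (nab \<xi> X x) (Y x) + g x (X x) (nab \<xi> Y x)"
    using metr_pt X Y by simp
  moreover have "g x (br \<xi> X x) (Y x) = g x (nab \<xi> X x) (Y x) - g x (nab X \<xi> x) (Y x)"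
    unfolding tors_pt[OF xiG X] using X Y by (simp add: gdiff1)
  moreover have "g x (X x) (br \<xi> Y x) = g x (X x) (nab \<xi> Y x) - g x (X x) (nab Y \<xi> x)"
    unfolding tors_pt[OF xiG Y] using X Y by (simp add: gdiff2)
  moreover have "g x (X x) (nab Y \<xi> x) = g x (nab Y \<xi> x) (X x)" using X Y gsym by simp
  ultimately show ?thesis by simp
qed

lemma dPhi_xi: assumes X: "X \<in> \<Gamma>" and Y: "Y \<in> \<Gamma>"
  shows "\<rho> \<xi> (\<lambda>x. g x (X x) (F x (Y x))) x - g x (br \<xi> X x) (F x (Y x)) - g x (X x) (F x (br \<xi> Y x)) = 0"
proof -
  have d: "\<rho> \<xi> (\<lambda>x. g x (X x) (F x (Y x))) x - g x (br \<xi> X x) (F x (Y x))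
       + \<rho> X (\<lambda>x. g x (Y x) (F x (\<xi> x))) x - g x (br X Y x) (F x (\<xi> x))
       + \<rho> Y (\<lambda>x. g x (\<xi> x) (F x (X x))) x - g x (br Y \<xi> x) (F x (X x)) = 0"
    using dPhi0[OF xiG X Y] .
  have f1: "(\<lambda>x. g x (Y x) (F x (\<xi> x))) = (\<lambda>x. 0)" using Y by simp
  have f2: "(\<lambda>x. g x (\<xi> x) (F x (X x))) = (\<lambda>x. 0)" using X eg' by (simp flip: eg')
  have f3: "g x (br Y \<xi> x) (F x (X x)) = g x (X x) (F x (br \<xi> Y x))"
  proof -
    have "br Y \<xi> x = - br \<xi> Y x" using Y by (intro br_anti_pt) simp_all
    hence "g x (br Y \<xi> x) (F x (X x)) = - g x (br \<xi> Y x) (F x (X x))" using X Y by (simp add: gneg1)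
    also have "\<dots> = g x (F x (br \<xi> Y x)) (X x)" using X Y gskew by simp
    also have "\<dots> = g x (X x) (F x (br \<xi> Y x))" using X Y gsym by simp
    finally show ?thesis .
  qed
  show ?thesis using d f3 unfolding f1 f2 using X Y by simp
qed

end

context CR begin

abbreviation "NN \<equiv> N3 br F \<xi>"

lemma N_def': "NN s = (\<lambda>x. (1/2) *\<^sub>R (br \<xi> (\<lambda>y. F y (s y)) x - F x (br \<xi> s x)))"
  unfolding N3_def fapp_def ..

lemma NG[simp]: "s \<in> \<Gamma> \<Longrightarrow> NN s \<in> \<Gamma>"
proof -
  assume s: "s \<in> \<Gamma>"
  have "(\<lambda>x. br \<xi> (\<lambda>y. F y (s y)) x - F x (br \<xi> s x)) \<in> \<Gamma>" using s by simp
  thus ?thesis unfolding N_def' by (rule Gcsm)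
qed

lemma NE[simp]: "s \<in> \<Gamma> \<Longrightarrow> NN s x \<in> E x" using NG Gin by blast

lemma N_xi: "NN \<xi> = (\<lambda>x. 0)"
proof -
  have "(\<lambda>y. F y (\<xi> y)) = (\<lambda>y. 0)" by simp
  thus ?thesis unfolding N_def' using br_self[OF xiG] br_zero2[OF xiG] by simp
qed

lemma eN: "s \<in> \<Gamma> \<Longrightarrow> \<eta> x (NN s x) = 0"
  unfolding N_def' by (simp add: escale ediff eta_br_xi_F)

lemma FFfun: "s \<in> \<Gamma> \<Longrightarrow> (\<lambda>y. F y (F y (s y))) = (\<lambda>y. - s y + \<eta> y (s y) *\<^sub>R \<xi> y)"
  using FF by simp

lemma br_xi_FF: assumes s: "s \<in> \<Gamma>"
  shows "br \<xi> (\<lambda>y. F y (F y (s y))) x = - br \<xi> s x + \<eta> x (br \<xi> s x) *\<^sub>R \<xi> x"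
proof -
  have "br \<xi> (\<lambda>y. - s y + \<eta> y (s y) *\<^sub>R \<xi> y) x = - br \<xi> s x + (\<eta> x (s x) *\<^sub>R br \<xi> \<xi> x + \<rho> \<xi> (\<lambda>y. \<eta> y (s y)) x *\<^sub>R \<xi> x)"
    using s by (simp add: brA2 brN2 brS2 brD2)
  thus ?thesis unfolding FFfun[OF s] using br_self[OF xiG] eta_br_xi[OF s] by simp
qed

lemma FN: assumes s: "s \<in> \<Gamma>" shows "F x (NN s x) = - NN (\<lambda>y. F y (s y)) x"
proof -
  have "F x (NN s x) = (1/2) *\<^sub>R (F x (br \<xi> (\<lambda>y. F y (s y)) x) - F x (F x (br \<xi> s x)))"
    unfolding N_def' using s by (simp add: Fscale Fdiff)
  also have "\<dots> = (1/2) *\<^sub>R (F x (br \<xi> (\<lambda>y. F y (s y)) x) + br \<xi> s x - \<eta> x (br \<xi> s x) *\<^sub>R \<xi> x)"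
    using s by (simp add: FF)
  finally have 1: "F x (NN s x) = \<dots>" .
  have 2: "NN (\<lambda>y. F y (s y)) x = (1/2) *\<^sub>R (- br \<xi> s x + \<eta> x (br \<xi> s x) *\<^sub>R \<xi> x - F x (br \<xi> (\<lambda>y. F y (s y)) x))"
    unfolding N_def' using br_xi_FF[OF s] by simp
  show ?thesis unfolding 1 2 by (simp add: algebra_simps)
qed

lemma N_add: assumes s: "s \<in> \<Gamma>" and t: "t \<in> \<Gamma>" shows "NN (\<lambda>x. s x + t x) x = NN s x + NN t x"
proof -
  have e: "(\<lambda>y. F y (s y + t y)) = (\<lambda>y. F y (s y) + F y (t y))" using s t by (simp add: Fadd)
  show ?thesis unfolding N_def' e using s t by (simp add: brA2 Fadd algebra_simps)
qed

lemma N_scale: assumes f: "f \<in> C" and s: "s \<in> \<Gamma>" shows "NN (\<lambda>x. f x *\<^sub>R s x) x = f x *\<^sub>R NN s x"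
proof -
  have e: "(\<lambda>y. F y (f y *\<^sub>R s y)) = (\<lambda>y. f y *\<^sub>R F y (s y))" using s by (simp add: Fscale)
  show ?thesis unfolding N_def' e using s f by (simp add: brS2 Fadd Fscale algebra_simps)
qed

lemma N_FF: assumes s: "s \<in> \<Gamma>" shows "NN (\<lambda>y. F y (F y (s y))) x = - NN s x"
proof -
  have "NN (\<lambda>y. - s y + \<eta> y (s y) *\<^sub>R \<xi> y) x = NN (\<lambda>y. - s y) x + NN (\<lambda>y. \<eta> y (s y) *\<^sub>R \<xi> y) x"
    using s by (intro N_add) simp_all
  also have "NN (\<lambda>y. \<eta> y (s y) *\<^sub>R \<xi> y) x = 0" using s N_scale[of "\<lambda>y. \<eta> y (s y)" \<xi> x] N_xi by simp
  also have "NN (\<lambda>y. - s y) x = - NN s x" using s N_scale[of "\<lambda>y. -1" s x] by simp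
  finally show ?thesis unfolding FFfun[OF s] by simp
qed

lemma K_FY: assumes X: "X \<in> \<Gamma>" and Y: "Y \<in> \<Gamma>"
  shows "g x (nab X \<xi> x) (F x (Y x)) = - g x (X x) (NN Y x) - g x (X x) (Y x) + \<eta> x (X x) * \<eta> x (Y x)"
proof -
  have FY: "(\<lambda>y. F y (Y y)) \<in> \<Gamma>" using Y by simp
  have L: "\<rho> \<xi> (\<lambda>x. g x (X x) (F x (Y x))) x - g x (br \<xi> X x) (F x (Y x)) - g x (X x) (br \<xi> (\<lambda>y. F y (Y y)) x)
     = g x (nab X \<xi> x) (F x (Y x)) + g x (nab (\<lambda>y. F y (Y y)) \<xi> x) (X x)"
    using Lxi[OF X FY] by simp
  have P: "\<rho> \<xi> (\<lambda>x. g x (X x) (F x (Y x))) x - g x (br \<xi> X x) (F x (Y x)) - g x (X x) (F x (br \<xi> Y x)) = 0"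
    using dPhi_xi[OF X Y] .
  have n: "g x (X x) (NN Y x) = (1/2) * (g x (X x) (br \<xi> (\<lambda>y. F y (Y y)) x) - g x (X x) (F x (br \<xi> Y x)))"
    unfolding N_def' using X Y by (simp add: gscale2 gdiff2)
  have d: "g x (nab (\<lambda>y. F y (Y y)) \<xi> x) (X x) - g x (nab X \<xi> x) (F x (Y x)) = 2 * g x (F x (Y x)) (F x (X x))"
    using dEta_nab[OF FY X] by simp
  have gf: "g x (F x (Y x)) (F x (X x)) = g x (X x) (Y x) - \<eta> x (X x) * \<eta> x (Y x)"
    using X Y gFF gsym by simp
  show ?thesis using L P n d gf by (simp add: algebra_simps)
qed

lemma K_xi: assumes X: "X \<in> \<Gamma>" shows "g x (nab X \<xi> x) (\<xi> x) = 0"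
proof -
  have "(\<lambda>x. g x (\<xi> x) (\<xi> x)) = (\<lambda>x. 1)" by (intro ext) (metis eg etaxi xiE)
  hence "\<rho> X (\<lambda>x. g x (\<xi> x) (\<xi> x)) x = 0" using X by simp
  moreover have "\<rho> X (\<lambda>x. g x (\<xi> x) (\<xi> x)) x = g x (nab X \<xi> x) (\<xi> x) + g x (\<xi> x) (nab X \<xi> x)"
    using metr_pt X by simp
  moreover have "g x (\<xi> x) (nab X \<xi> x) = g x (nab X \<xi> x) (\<xi> x)" using X gsym by simp
  ultimately show ?thesis by simp
qed

lemma K_gen: assumes X: "X \<in> \<Gamma>" and Z: "Z \<in> \<Gamma>"
  shows "g x (nab X \<xi> x) (Z x) = g x (X x) (F x (Z x)) + g x (X x) (NN (\<lambda>y. F y (Z y)) x)"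
proof -
  have FZ: "(\<lambda>y. F y (Z y)) \<in> \<Gamma>" using Z by simp
  have a: "g x (nab X \<xi> x) (F x (F x (Z x))) = - g x (X x) (NN (\<lambda>y. F y (Z y)) x) - g x (X x) (F x (Z x))"
    using K_FY[OF X FZ] Z by simp
  have b: "g x (nab X \<xi> x) (F x (F x (Z x))) = - g x (nab X \<xi> x) (Z x) + \<eta> x (Z x) * g x (nab X \<xi> x) (\<xi> x)"
    using X Z by (simp add: FF gadd2 gneg2 gscale2 gdiff2)
  show ?thesis using a b K_xi[OF X, of x] by simp
qed

lemma S_sym: assumes X: "X \<in> \<Gamma>" and Y: "Y \<in> \<Gamma>"
  shows "g x (X x) (NN (\<lambda>y. F y (Y y)) x) = g x (Y x) (NN (\<lambda>y. F y (X y)) x)"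
proof -
  have d: "g x (nab X \<xi> x) (Y x) - g x (nab Y \<xi> x) (X x) = 2 * g x (X x) (F x (Y x))" using dEta_nab[OF X Y] .
  have s: "g x (Y x) (F x (X x)) = - g x (X x) (F x (Y x))"
    using X Y gskew[of "Y x" x "X x"] gsym[of "F x (Y x)" x "X x"] by simp
  show ?thesis using d K_gen[OF X Y] K_gen[OF Y X] s by simp
qed

lemma N_sym: assumes X: "X \<in> \<Gamma>" and Y: "Y \<in> \<Gamma>"
  shows "g x (NN X x) (Y x) = g x (X x) (NN Y x)"
proof -
  have FX: "(\<lambda>y. F y (X y)) \<in> \<Gamma>" using X by simp
  have "g x (NN X x) (Y x) = - g x (NN (\<lambda>y. F y (F y (X y))) x) (Y x)"
    using N_FF[OF X] X Y by (simp add: gneg1)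
  also have "\<dots> = - g x (Y x) (NN (\<lambda>y. F y (F y (X y))) x)"
    using X Y gsym by simp
  also have "\<dots> = - g x (F x (X x)) (NN (\<lambda>y. F y (Y y)) x)"
    using S_sym[OF Y FX] by simp
  also have "\<dots> = g x (F x (X x)) (F x (NN Y x))"
    using FN[OF Y] X Y by (simp add: gneg2)
  also have "\<dots> = g x (X x) (NN Y x)" using gFF X Y eN by simp
  finally show ?thesis .
qed

lemma nab_xi_pt: assumes X: "X \<in> \<Gamma>"
  shows "nab X \<xi> x = - F x (X x) - F x (NN X x)"
proof -
  let ?w = "nab X \<xi> x - (- F x (X x) - F x (NN X x))"
  have wE: "?w \<in> E x" using X by simp
  have "g x ?w (Z x) = 0" if Z: "Z \<in> \<Gamma>" for Z
  proof -
    have k: "g x (nab X \<xi> x) (Z x) = g x (X x) (F x (Z x)) + g x (X x) (NN (\<lambda>y. F y (Z y)) x)"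
      using K_gen[OF X Z] .
    have FX: "(\<lambda>y. F y (X y)) \<in> \<Gamma>" and FZ: "(\<lambda>y. F y (Z y)) \<in> \<Gamma>" using X Z by simp_all
    have 1: "g x (X x) (F x (Z x)) = - g x (F x (X x)) (Z x)" using gskew X Z by simp
    have 2: "g x (X x) (NN (\<lambda>y. F y (Z y)) x) = g x (NN (\<lambda>y. F y (X y)) x) (Z x)"
      using S_sym[OF X Z] gsym[of "Z x" x "NN (\<lambda>y. F y (X y)) x"] X Z by simp
    have 3: "NN (\<lambda>y. F y (X y)) x = - F x (NN X x)" using FN[OF X] by simp
    show ?thesis using k 1 2 3 X Z by (simp add: gdiff1 gneg1)
  qed
  hence "?w = 0" using nondeg[OF wE] by blast
  thus ?thesis by simp
qed

end

context CR begin

abbreviation "AA X Y v x \<equiv> g x (covF nab F X Y x) v"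

lemma cov_def': "covF nab F X Y x = nab X (\<lambda>y. F y (Y y)) x - F x (nab X Y x)"
  unfolding covF_def fapp_def ..

lemma covE[simp]: "X \<in> \<Gamma> \<Longrightarrow> Y \<in> \<Gamma> \<Longrightarrow> covF nab F X Y x \<in> E x"
  unfolding cov_def' by simp

lemma rho_fun_neg: "s \<in> \<Gamma> \<Longrightarrow> f \<in> C \<Longrightarrow> h = (\<lambda>x. - f x) \<Longrightarrow> \<rho> s h x = - \<rho> s f x"
  using rho_neg by simp

lemma P1: assumes X: "X \<in> \<Gamma>" and Y: "Y \<in> \<Gamma>" and Z: "Z \<in> \<Gamma>"
  shows "AA X Y (Z x) x = - AA X Z (Y x) x"
proof -
  have FY: "(\<lambda>y. F y (Y y)) \<in> \<Gamma>" and FZ: "(\<lambda>y. F y (Z y)) \<in> \<Gamma>" using Y Z by simp_all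
  have m1: "\<rho> X (\<lambda>x. g x (F x (Y x)) (Z x)) x = g x (nab X (\<lambda>y. F y (Y y)) x) (Z x) + g x (F x (Y x)) (nab X Z x)"
    using metr_pt[OF X FY Z] by simp
  have m2: "\<rho> X (\<lambda>x. g x (Y x) (F x (Z x))) x = g x (nab X Y x) (F x (Z x)) + g x (Y x) (nab X (\<lambda>y. F y (Z y)) x)"
    using metr_pt[OF X Y FZ] by simp
  have fe: "(\<lambda>x. g x (F x (Y x)) (Z x)) = (\<lambda>x. - g x (Y x) (F x (Z x)))" using gskew Y Z by simp
  have m: "\<rho> X (\<lambda>x. g x (F x (Y x)) (Z x)) x = - \<rho> X (\<lambda>x. g x (Y x) (F x (Z x))) x"
    using rho_fun_neg[OF X _ fe] Y FZ by simp
  have 1: "AA X Y (Z x) x = g x (nab X (\<lambda>y. F y (Y y)) x) (Z x) + g x (nab X Y x) (F x (Z x))"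
    unfolding cov_def' using X Y Z by (simp add: gdiff1 gskew)
  have 2: "AA X Z (Y x) x = g x (nab X (\<lambda>y. F y (Z y)) x) (Y x) + g x (nab X Z x) (F x (Y x))"
    unfolding cov_def' using X Y Z by (simp add: gdiff1 gskew)
  have s1: "g x (F x (Y x)) (nab X Z x) = g x (nab X Z x) (F x (Y x))" using X Y Z gsym by simp
  have s2: "g x (Y x) (nab X (\<lambda>y. F y (Z y)) x) = g x (nab X (\<lambda>y. F y (Z y)) x) (Y x)" using X Y Z gsym by simp
  show ?thesis using m1 m2 m 1 2 s1 s2 by simp
qed

lemma P2raw: assumes X: "X \<in> \<Gamma>" and Y: "Y \<in> \<Gamma>" and Z: "Z \<in> \<Gamma>"
  shows "AA X Z (Y x) x + AA Y X (Z x) x + AA Z Y (X x) x = 0"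
proof -
  have t: "\<rho> A (\<lambda>x. g x (B x) (F x (D x))) x - g x (br A B x) (F x (D x))
      = AA A D (B x) x - g x (F x (B x)) (nab A D x) + g x (nab B A x) (F x (D x))"
    if A: "A \<in> \<Gamma>" and B: "B \<in> \<Gamma>" and D: "D \<in> \<Gamma>" for A B D
  proof -
    have FD: "(\<lambda>y. F y (D y)) \<in> \<Gamma>" using D by simp
    have m: "\<rho> A (\<lambda>x. g x (B x) (F x (D x))) x = g x (nab A B x) (F x (D x)) + g x (B x) (nab A (\<lambda>y. F y (D y)) x)"
      using metr_pt[OF A B FD] by simp
    have b: "g x (br A B x) (F x (D x)) = g x (nab A B x) (F x (D x)) - g x (nab B A x) (F x (D x))"
      unfolding tors_pt[OF A B] using A B D by (simp add: gdiff1)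
    have c: "AA A D (B x) x = g x (nab A (\<lambda>y. F y (D y)) x) (B x) - g x (F x (nab A D x)) (B x)"
      unfolding cov_def' using A B D by (simp add: gdiff1)
    have s1: "g x (F x (nab A D x)) (B x) = - g x (F x (B x)) (nab A D x)"
      using A B D gskew[of "nab A D x" x "B x"] gskew[of "B x" x "nab A D x"] gsym[of "nab A D x" x "F x (B x)"] by simp
    have s2: "g x (B x) (nab A (\<lambda>y. F y (D y)) x) = g x (nab A (\<lambda>y. F y (D y)) x) (B x)" using A B D gsym by simp
    show ?thesis using m b c s1 s2 by simp
  qed
  have d: "\<rho> X (\<lambda>x. g x (Y x) (F x (Z x))) x - g x (br X Y x) (F x (Z x))
       + \<rho> Y (\<lambda>x. g x (Z x) (F x (X x))) x - g x (br Y Z x) (F x (X x))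
       + \<rho> Z (\<lambda>x. g x (X x) (F x (Y x))) x - g x (br Z X x) (F x (Y x)) = 0"
    using dPhi0[OF X Y Z] .
  have s: "g x (F x (Y x)) (nab X Z x) = g x (nab X Z x) (F x (Y x))"
          "g x (F x (Z x)) (nab Y X x) = g x (nab Y X x) (F x (Z x))"
          "g x (F x (X x)) (nab Z Y x) = g x (nab Z Y x) (F x (X x))"
    using X Y Z gsym by simp_all
  show ?thesis using d t[OF X Y Z] t[OF Y Z X] t[OF Z X Y] s by simp
qed

lemma P2: assumes X: "X \<in> \<Gamma>" and Y: "Y \<in> \<Gamma>" and Z: "Z \<in> \<Gamma>"
  shows "AA X Y (Z x) x + AA Y Z (X x) x + AA Z X (Y x) x = 0"
  using P2raw[OF X Y Z, of x] P1[OF X Z Y, of x] P1[OF Y X Z, of x] P1[OF Z Y X, of x] by simp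

lemma P3: assumes X: "X \<in> \<Gamma>" and Y: "Y \<in> \<Gamma>" and Z: "Z \<in> \<Gamma>"
  shows "AA X (\<lambda>y. F y (Y y)) (Z x) x - AA X Y (F x (Z x)) x
     = g x (nab X \<xi> x) (Y x) * \<eta> x (Z x) + \<eta> x (Y x) * g x (nab X \<xi> x) (Z x)"
proof -
  have FY: "(\<lambda>y. F y (Y y)) \<in> \<Gamma>" using Y by simp
  have nFF: "nab X (\<lambda>y. F y (F y (Y y))) x = \<eta> x (Y x) *\<^sub>R nab X \<xi> x + \<rho> X (\<lambda>y. \<eta> y (Y y)) x *\<^sub>R \<xi> x - nab X Y x"
    unfolding FFfun[OF Y] using X Y by (simp add: nabD2 nabS2)
  have r: "\<rho> X (\<lambda>y. \<eta> y (Y y)) x = \<eta> x (nab X Y x) + g x (nab X \<xi> x) (Y x)"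
    unfolding eta_fun[OF Y] using metr_pt[OF X Y xiG, of x] X Y eg gsym by simp
  have 1: "AA X (\<lambda>y. F y (Y y)) (Z x) x = g x (nab X (\<lambda>y. F y (F y (Y y))) x) (Z x) - g x (F x (nab X (\<lambda>y. F y (Y y)) x)) (Z x)"
    unfolding cov_def' using X Y Z by (simp add: gdiff1)
  have 2: "AA X Y (F x (Z x)) x = g x (nab X (\<lambda>y. F y (Y y)) x) (F x (Z x)) - g x (F x (nab X Y x)) (F x (Z x))"
    unfolding cov_def' using X Y Z by (simp add: gdiff1)
  have 3: "g x (F x (nab X (\<lambda>y. F y (Y y)) x)) (Z x) = - g x (nab X (\<lambda>y. F y (Y y)) x) (F x (Z x))"
    using gskew X Y Z by simp
  have 4: "g x (F x (nab X Y x)) (F x (Z x)) = g x (nab X Y x) (Z x) - \<eta> x (nab X Y x) * \<eta> x (Z x)"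
    using gFF X Y Z by simp
  have 5: "g x (nab X (\<lambda>y. F y (F y (Y y))) x) (Z x) = \<eta> x (Y x) * g x (nab X \<xi> x) (Z x)
      + \<rho> X (\<lambda>y. \<eta> y (Y y)) x * \<eta> x (Z x) - g x (nab X Y x) (Z x)"
    unfolding nFF using X Y Z by (simp add: gadd1 gdiff1 gscale1 eg' gsym[of "\<xi> x" x "Z x"])
  show ?thesis using 1 2 3 4 5 r by (simp add: algebra_simps)
qed

lemma A_xi: assumes W: "W \<in> \<Gamma>" and U: "U \<in> \<Gamma>"
  shows "AA W U (\<xi> x) x = - g x (nab W \<xi> x) (F x (U x))"
proof -
  have f: "(\<lambda>y. F y (\<xi> y)) = (\<lambda>y. 0)" by simp
  have "covF nab F W \<xi> x = - F x (nab W \<xi> x)"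
    unfolding cov_def' f using nab_zero2[OF W] by simp
  hence "AA W \<xi> (U x) x = g x (nab W \<xi> x) (F x (U x))"
    using W U gskew by (simp add: gneg1)
  thus ?thesis using P1[OF W U xiG, of x] by simp
qed

lemma A_FF3: assumes W: "W \<in> \<Gamma>" and U: "U \<in> \<Gamma>" and v: "v \<in> E x"
  shows "AA W U (F x (F x v)) x = - AA W U v x + \<eta> x v * AA W U (\<xi> x) x"
  using W U v by (simp add: FF gadd2 gneg2 gscale2 gdiff2)

lemma K_F1: assumes U: "U \<in> \<Gamma>" and W: "W \<in> \<Gamma>"
  shows "g x (nab (\<lambda>y. F y (U y)) \<xi> x) (W x) = g x (U x) (W x) - \<eta> x (U x) * \<eta> x (W x) - g x (NN U x) (W x)"
proof -
  have FU: "(\<lambda>y. F y (U y)) \<in> \<Gamma>" using U by simp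
  have n: "nab (\<lambda>y. F y (U y)) \<xi> x = - F x (F x (U x)) - F x (NN (\<lambda>y. F y (U y)) x)"
    using nab_xi_pt[OF FU] by simp
  have "F x (NN (\<lambda>y. F y (U y)) x) = - F x (F x (NN U x))" using FN[OF U] U by (simp add: Fneg)
  also have "\<dots> = NN U x" using FF[of "NN U x" x] U eN by simp
  finally have n2: "F x (NN (\<lambda>y. F y (U y)) x) = NN U x" .
  have "nab (\<lambda>y. F y (U y)) \<xi> x = U x - \<eta> x (U x) *\<^sub>R \<xi> x - NN U x"
    unfolding n n2 using U FF by simp
  thus ?thesis using U W by (simp add: gdiff1 gscale1 eg')
qed

lemma alpha: assumes U: "U \<in> \<Gamma>" and V: "V \<in> \<Gamma>" and W: "W \<in> \<Gamma>"
  shows "AA (\<lambda>y. F y (U y)) (\<lambda>y. F y (V y)) (W x) x - AA (\<lambda>y. F y (V y)) (\<lambda>y. F y (U y)) (W x) x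
    = AA W U (V x) x + \<eta> x (V x) * (- g x (NN U x) (W x) - g x (U x) (W x) + \<eta> x (W x) * \<eta> x (U x))
      - \<eta> x (U x) * (- g x (NN V x) (W x) - g x (V x) (W x) + \<eta> x (W x) * \<eta> x (V x))"
proof -
  have FU: "(\<lambda>y. F y (U y)) \<in> \<Gamma>" and FV: "(\<lambda>y. F y (V y)) \<in> \<Gamma>" using U V by simp_all
  have c: "AA (\<lambda>y. F y (U y)) (\<lambda>y. F y (V y)) (W x) x + AA (\<lambda>y. F y (V y)) W (F x (U x)) x
           + AA W (\<lambda>y. F y (U y)) (F x (V x)) x = 0"
    using P2[OF FU FV W, of x] by simp
  have p1: "AA (\<lambda>y. F y (V y)) W (F x (U x)) x = - AA (\<lambda>y. F y (V y)) (\<lambda>y. F y (U y)) (W x) x"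
    using P1[OF FV W FU, of x] by simp
  have p3: "AA W (\<lambda>y. F y (U y)) (F x (V x)) x - AA W U (F x (F x (V x))) x
     = g x (nab W \<xi> x) (U x) * \<eta> x (F x (V x)) + \<eta> x (U x) * g x (nab W \<xi> x) (F x (V x))"
    using P3[OF W U FV, of x] by simp
  have ff: "AA W U (F x (F x (V x))) x = - AA W U (V x) x + \<eta> x (V x) * AA W U (\<xi> x) x"
    using A_FF3[OF W U] V by simp
  have ax: "AA W U (\<xi> x) x = - g x (nab W \<xi> x) (F x (U x))" using A_xi[OF W U] .
  have k1: "g x (nab W \<xi> x) (F x (U x)) = - g x (W x) (NN U x) - g x (W x) (U x) + \<eta> x (W x) * \<eta> x (U x)"
    using K_FY[OF W U] .
  have k2: "g x (nab W \<xi> x) (F x (V x)) = - g x (W x) (NN V x) - g x (W x) (V x) + \<eta> x (W x) * \<eta> x (V x)"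
    using K_FY[OF W V] .
  have s: "g x (W x) (NN U x) = g x (NN U x) (W x)" "g x (W x) (U x) = g x (U x) (W x)"
     "g x (W x) (NN V x) = g x (NN V x) (W x)" "g x (W x) (V x) = g x (V x) (W x)"
    using U V W gsym by simp_all
  have e: "\<eta> x (F x (V x)) = 0" using V by simp
  show ?thesis using c p1 p3 ff ax k1 k2 s e by (simp add: algebra_simps)
qed

lemma beta: assumes U: "U \<in> \<Gamma>" and V: "V \<in> \<Gamma>" and W: "W \<in> \<Gamma>"
  shows "AA (\<lambda>y. F y (U y)) (\<lambda>y. F y (V y)) (W x) x + AA (\<lambda>y. F y (U y)) (\<lambda>y. F y (W y)) (V x) x
    = (g x (U x) (W x) - \<eta> x (U x) * \<eta> x (W x) - g x (NN U x) (W x)) * \<eta> x (V x)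
      + \<eta> x (W x) * (g x (U x) (V x) - \<eta> x (U x) * \<eta> x (V x) - g x (NN U x) (V x))"
proof -
  have FU: "(\<lambda>y. F y (U y)) \<in> \<Gamma>" and FV: "(\<lambda>y. F y (V y)) \<in> \<Gamma>" and FW: "(\<lambda>y. F y (W y)) \<in> \<Gamma>"
    using U V W by simp_all
  have p1: "AA (\<lambda>y. F y (U y)) (\<lambda>y. F y (V y)) (W x) x = - AA (\<lambda>y. F y (U y)) W (F x (V x)) x"
    using P1[OF FU FV W, of x] by simp
  have p3: "AA (\<lambda>y. F y (U y)) (\<lambda>y. F y (W y)) (V x) x - AA (\<lambda>y. F y (U y)) W (F x (V x)) x
     = g x (nab (\<lambda>y. F y (U y)) \<xi> x) (W x) * \<eta> x (V x) + \<eta> x (W x) * g x (nab (\<lambda>y. F y (U y)) \<xi> x) (V x)"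
    using P3[OF FU W V, of x] .
  show ?thesis using p1 p3 K_F1[OF U W, of x] K_F1[OF U V, of x] by (simp add: algebra_simps)
qed

end

lemma lin_onD': "lin_on V f \<Longrightarrow> real_vector.subspace V \<Longrightarrow> u \<in> V \<Longrightarrow> v \<in> V \<Longrightarrow>
   f (u + v) = f u + f v \<and> f (a *\<^sub>R u) = a *\<^sub>R f u \<and> f 0 = 0"
proof -
  assume l: "lin_on V f" and S: "real_vector.subspace V" and u: "u \<in> V" and v: "v \<in> V"
  have z: "0 \<in> V" using S real_vector.subspace_0 by blast
  have "f (1 *\<^sub>R 0 + 0) = 1 *\<^sub>R f 0 + f 0" using l z unfolding lin_on_def by blast
  hence f0: "f 0 = 0" by simp
  have "f (1 *\<^sub>R u + v) = 1 *\<^sub>R f u + f v" using l u v unfolding lin_on_def by blast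
  moreover have "f (a *\<^sub>R u + 0) = a *\<^sub>R f u + f 0" using l u z unfolding lin_on_def by blast
  ultimately show ?thesis using f0 by simp
qed

lemma lin_on_sum:
  assumes l: "lin_on V f" and S: "real_vector.subspace V" and I: "finite I" and v: "\<And>i. i \<in> I \<Longrightarrow> v i \<in> V"
  shows "f (\<Sum>i\<in>I. a i *\<^sub>R v i) = (\<Sum>i\<in>I. a i *\<^sub>R f (v i))"
  using I v
proof (induction I rule: finite_induct)
  case empty
  then show ?case using lin_onD'[OF l S, of 0 0] S real_vector.subspace_0 by auto
next
  case (insert i I)
  have vi: "v i \<in> V" using insert by simp
  have sI: "(\<Sum>i\<in>I. a i *\<^sub>R v i) \<in> V"
    using insert S by (intro real_vector.subspace_sum) (auto intro: real_vector.subspace_scale)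
  have ai: "a i *\<^sub>R v i \<in> V" using vi S real_vector.subspace_scale by blast
  have "f (\<Sum>i\<in>insert i I. a i *\<^sub>R v i) = f (a i *\<^sub>R v i + (\<Sum>i\<in>I. a i *\<^sub>R v i))"
    using insert by simp
  also have "\<dots> = f (a i *\<^sub>R v i) + f (\<Sum>i\<in>I. a i *\<^sub>R v i)" using lin_onD'[OF l S ai sI] by blast
  also have "f (a i *\<^sub>R v i) = a i *\<^sub>R f (v i)" using lin_onD'[OF l S vi vi] by blast
  finally show ?case using insert by simp
qed

lemma trace_zero:
  fixes V :: "'v::real_vector set"
  assumes S: "real_vector.subspace V" and dimV: "real_vector.dim V = Suc m"
    and lT: "lin_on V T" and TV: "\<And>v. v \<in> V \<Longrightarrow> T v \<in> V"
    and lJ: "lin_on V J" and JV: "\<And>v. v \<in> V \<Longrightarrow> J v \<in> V"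
    and lK: "lin_on V K" and KV: "\<And>v. v \<in> V \<Longrightarrow> K v \<in> V"
    and JK: "\<And>v. v \<in> V \<Longrightarrow> J (K v) = v" and KJ: "\<And>v. v \<in> V \<Longrightarrow> K (J v) = v"
    and TJ: "\<And>v. v \<in> V \<Longrightarrow> T (J v) = - J (T v)"
  shows "fiber_trace V T = 0"
proof -
  define B where "B = (SOME B. independent B \<and> real_vector.span B = V)"
  obtain B0 where B0: "B0 \<subseteq> V" "independent B0" "V \<subseteq> real_vector.span B0"
     "card B0 = real_vector.dim V"
    by (rule real_vector.basis_exists[of V]) auto
  have "real_vector.span B0 = V" using B0 S real_vector.span_subspace by blast
  hence "\<exists>B. independent B \<and> real_vector.span B = V" using B0 by blast
  hence Bp: "independent B \<and> real_vector.span B = V"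
    unfolding B_def by (rule someI_ex)
  have ind: "independent B" and spB: "real_vector.span B = V" using Bp by auto
  have spV: "real_vector.span V = V" using S by simp
  have BV: "B \<subseteq> V" using spB real_vector.span_superset by blast
  have "real_vector.dim V = card B"
    using real_vector.dim_eq_card[of B V] ind spB spV by simp
  hence "card B = Suc m" using dimV by simp
  hence finB: "finite B" using card.infinite by force
  let ?R = "real_vector.representation B"
  have inV: "\<And>v. v \<in> V \<Longrightarrow> v \<in> real_vector.span B" using spB by simp
  have expand: "v = (\<Sum>c\<in>B. ?R v c *\<^sub>R c)" if "v \<in> V" for v
    using real_vector.sum_representation_eq[OF ind inV[OF that] finB] by simp
  have Rlin: "?R (\<Sum>c\<in>I. a c *\<^sub>R w c) b = (\<Sum>c\<in>I. a c * ?R (w c) b)"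
    if "\<And>c. c \<in> I \<Longrightarrow> w c \<in> V" for I a w b
  proof -
    have "?R (\<Sum>c\<in>I. a c *\<^sub>R w c) = (\<lambda>b. \<Sum>c\<in>I. ?R (a c *\<^sub>R w c) b)"
      using that by (intro real_vector.representation_sum[OF ind]) (auto intro: real_vector.span_scale inV)
    moreover have "?R (a c *\<^sub>R w c) = (\<lambda>b. a c * ?R (w c) b)" if "c \<in> I" for c
      using real_vector.representation_scale[OF ind inV] that \<open>\<And>c. c \<in> I \<Longrightarrow> w c \<in> V\<close> by blast
    ultimately show ?thesis by simp
  qed
  have sim: "(\<Sum>b\<in>B. ?R (K (T (J b))) b) = (\<Sum>b\<in>B. ?R (T b) b)"
  proof -
    have step1: "?R (K (T (J b))) b = (\<Sum>c\<in>B. ?R (J b) c * ?R (K (T c)) b)" if b: "b \<in> B" for b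
    proof -
      have Jb: "J b \<in> V" using b BV JV by auto
      have "T (J b) = (\<Sum>c\<in>B. ?R (J b) c *\<^sub>R T c)"
        by (subst expand[OF Jb]) (rule lin_on_sum[OF lT S finB], use BV in auto)
      hence "K (T (J b)) = (\<Sum>c\<in>B. ?R (J b) c *\<^sub>R K (T c))"
        using lin_on_sum[OF lK S finB, of "\<lambda>c. T c" "?R (J b)"] BV TV by auto
      thus ?thesis using Rlin[of B "\<lambda>c. K (T c)" "?R (J b)" b] BV TV KV by auto
    qed
    have step2: "(\<Sum>b\<in>B. ?R (K (T c)) b * ?R (J b) c) = ?R (T c) c" if c: "c \<in> B" for c
    proof -
      have KTc: "K (T c) \<in> V" using c BV TV KV by auto
      have "(\<Sum>b\<in>B. ?R (K (T c)) b * ?R (J b) c) = ?R (\<Sum>b\<in>B. ?R (K (T c)) b *\<^sub>R J b) c"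
        using Rlin[of B J "?R (K (T c))" c] BV JV by (simp add: subset_iff)
      also have "(\<Sum>b\<in>B. ?R (K (T c)) b *\<^sub>R J b) = J (\<Sum>b\<in>B. ?R (K (T c)) b *\<^sub>R b)"
        using lin_on_sum[OF lJ S finB, of "\<lambda>b. b" "?R (K (T c))"] BV by (simp add: subset_iff)
      also have "(\<Sum>b\<in>B. ?R (K (T c)) b *\<^sub>R b) = K (T c)" using expand[OF KTc] by simp
      also have "J (K (T c)) = T c" using JK TV c BV by auto
      finally show ?thesis .
    qed
    have "(\<Sum>b\<in>B. ?R (K (T (J b))) b) = (\<Sum>b\<in>B. \<Sum>c\<in>B. ?R (J b) c * ?R (K (T c)) b)"
      using step1 by simp
    also have "\<dots> = (\<Sum>c\<in>B. \<Sum>b\<in>B. ?R (K (T c)) b * ?R (J b) c)"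
      by (subst sum.swap) (simp add: mult.commute)
    also have "\<dots> = (\<Sum>c\<in>B. ?R (T c) c)" using step2 by simp
    finally show ?thesis .
  qed
  have neg: "?R (K (T (J b))) b = - ?R (T b) b" if b: "b \<in> B" for b
  proof -
    have bV: "b \<in> V" using b BV by auto
    have "K (T (J b)) = K (- J (T b))" using TJ bV by simp
    also have "\<dots> = - K (J (T b))"
      using lin_onD'[OF lK S, of "J (T b)" "J (T b)" "-1"] JV TV bV by simp
    also have "\<dots> = - T b" using KJ TV bV by simp
    finally show ?thesis
      using real_vector.representation_neg[OF ind inV[of "T b"]] TV bV by simp
  qed
  have "(\<Sum>b\<in>B. ?R (T b) b) = - (\<Sum>b\<in>B. ?R (T b) b)"
    using sim neg by (simp add: sum_negf)
  hence "(\<Sum>b\<in>B. ?R (T b) b) = 0" by simp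
  thus ?thesis unfolding fiber_trace_def dependent_raw_def[symmetric] B_def[symmetric] Let_def by simp
qed


lemma alg_v:
  fixes ex ey ez Gxy Gxz Gyz hxy hxz hyz Axyz Ayzx Azxy Axzy Ayxz Azyx Txyz Tyzx Tzxy Txzy Tyxz Tzyx :: real
  assumes a1: "Txzy - Tzxy = Ayxz + ez*(-hxy - Gxy + ey*ex) - ex*(-hyz - Gyz + ey*ez)"
    and a2: "Tzyx - Tyzx = Axzy + ey*(-hxz - Gxz + ex*ez) - ez*(-hxy - Gxy + ex*ey)"
    and a3: "Txyz - Tyxz = Azxy + ey*(-hxz - Gxz + ez*ex) - ex*(-hyz - Gyz + ez*ey)"
    and b1: "Txyz + Txzy = (Gxz - ex*ez - hxz)*ey + ez*(Gxy - ex*ey - hxy)"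
    and b2: "Tzxy + Tzyx = (Gyz - ez*ey - hyz)*ex + ey*(Gxz - ez*ex - hxz)"
    and b3: "Tyzx + Tyxz = (Gxy - ey*ex - hxy)*ez + ex*(Gyz - ey*ez - hyz)"
    and p1: "Axzy = - Axyz" and p2: "Ayxz = - Ayzx" and p3: "Azyx = - Azxy"
    and c: "Axyz + Ayzx + Azxy = 0"
  shows "Axyz + Txyz = 2*Gxy*ez - ey*(Gxz + hxz + ex*ez)"
proof -
  have "2*Txyz = Azxy + Axzy - Ayxz + (ey*(-hxz - Gxz + ez*ex) - ex*(-hyz - Gyz + ez*ey))
     + ((Gxy - ey*ex - hxy)*ez + ex*(Gyz - ey*ez - hyz))
     + (ey*(-hxz - Gxz + ex*ez) - ez*(-hxy - Gxy + ex*ey))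
     - ((Gyz - ez*ey - hyz)*ex + ey*(Gxz - ez*ex - hxz))
     - (ez*(-hxy - Gxy + ey*ex) - ex*(-hyz - Gyz + ey*ez))
     + ((Gxz - ex*ez - hxz)*ey + ez*(Gxy - ex*ey - hxy))"
    using a1 a2 a3 b1 b2 b3 by linarith
  thus ?thesis using p1 p2 c by (simp add: algebra_simps)
qed

context CR begin

lemma item5_pt: assumes X: "X \<in> \<Gamma>" and Y: "Y \<in> \<Gamma>"
  shows "covF nab F X Y x + covF nab F (\<lambda>y. F y (X y)) (\<lambda>y. F y (Y y)) x
    = (2 * g x (X x) (Y x)) *\<^sub>R \<xi> x - \<eta> x (Y x) *\<^sub>R (X x + NN X x + \<eta> x (X x) *\<^sub>R \<xi> x)"
proof -
  have FX: "(\<lambda>y. F y (X y)) \<in> \<Gamma>" and FY: "(\<lambda>y. F y (Y y)) \<in> \<Gamma>" using X Y by simp_all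
  let ?w = "covF nab F X Y x + covF nab F (\<lambda>y. F y (X y)) (\<lambda>y. F y (Y y)) x
    - ((2 * g x (X x) (Y x)) *\<^sub>R \<xi> x - \<eta> x (Y x) *\<^sub>R (X x + NN X x + \<eta> x (X x) *\<^sub>R \<xi> x))"
  have wE: "?w \<in> E x" using X Y FX FY by simp
  have "g x ?w (Z x) = 0" if Z: "Z \<in> \<Gamma>" for Z
  proof -
    have FZ: "(\<lambda>y. F y (Z y)) \<in> \<Gamma>" using Z by simp
    have f1: "g x (NN Y x) (X x) = g x (NN X x) (Y x)"
      using N_sym[OF Y X, of x] gsym[of "Y x" x "NN X x"] X Y by simp
    have f2: "g x (NN Z x) (X x) = g x (NN X x) (Z x)"
      using N_sym[OF Z X, of x] gsym[of "Z x" x "NN X x"] X Z by simp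
    have f3: "g x (NN Z x) (Y x) = g x (NN Y x) (Z x)"
      using N_sym[OF Z Y, of x] gsym[of "Z x" x "NN Y x"] Y Z by simp
    have f4: "g x (Y x) (X x) = g x (X x) (Y x)" using gsym[of "Y x" x "X x"] X Y by simp
    have f5: "g x (Z x) (X x) = g x (X x) (Z x)" using gsym[of "Z x" x "X x"] X Z by simp
    have f6: "g x (Z x) (Y x) = g x (Y x) (Z x)" using gsym[of "Z x" x "Y x"] Y Z by simp
    note flips = f1 f2 f3 f4 f5 f6
    have key: "AA X Y (Z x) x + AA (\<lambda>y. F y (X y)) (\<lambda>y. F y (Y y)) (Z x) x
      = 2 * g x (X x) (Y x) * \<eta> x (Z x) - \<eta> x (Y x) * (g x (X x) (Z x) + g x (NN X x) (Z x) + \<eta> x (X x) * \<eta> x (Z x))"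
    proof (rule alg_v[where ex="\<eta> x (X x)" and ey="\<eta> x (Y x)" and ez="\<eta> x (Z x)"
        and Gxy="g x (X x) (Y x)" and Gxz="g x (X x) (Z x)" and Gyz="g x (Y x) (Z x)"
        and hxy="g x (NN X x) (Y x)" and hxz="g x (NN X x) (Z x)" and hyz="g x (NN Y x) (Z x)"
        and Ayzx="AA Y Z (X x) x" and Azxy="AA Z X (Y x) x" and Axzy="AA X Z (Y x) x"
        and Ayxz="AA Y X (Z x) x" and Azyx="AA Z Y (X x) x"
        and Tyzx="AA (\<lambda>y. F y (Y y)) (\<lambda>y. F y (Z y)) (X x) x"
        and Tzxy="AA (\<lambda>y. F y (Z y)) (\<lambda>y. F y (X y)) (Y x) x"
        and Txzy="AA (\<lambda>y. F y (X y)) (\<lambda>y. F y (Z y)) (Y x) x"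
        and Tyxz="AA (\<lambda>y. F y (Y y)) (\<lambda>y. F y (X y)) (Z x) x"
        and Tzyx="AA (\<lambda>y. F y (Z y)) (\<lambda>y. F y (Y y)) (X x) x"])
      show "AA (\<lambda>y. F y (X y)) (\<lambda>y. F y (Z y)) (Y x) x - AA (\<lambda>y. F y (Z y)) (\<lambda>y. F y (X y)) (Y x) x =
        AA Y X (Z x) x + \<eta> x (Z x) * (- g x (NN X x) (Y x) - g x (X x) (Y x) + \<eta> x (Y x) * \<eta> x (X x)) -
        \<eta> x (X x) * (- g x (NN Y x) (Z x) - g x (Y x) (Z x) + \<eta> x (Y x) * \<eta> x (Z x))"
        using alpha[OF X Z Y, of x] flips by (simp add: algebra_simps)
      show "AA (\<lambda>y. F y (Z y)) (\<lambda>y. F y (Y y)) (X x) x - AA (\<lambda>y. F y (Y y)) (\<lambda>y. F y (Z y)) (X x) x =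
        AA X Z (Y x) x + \<eta> x (Y x) * (- g x (NN X x) (Z x) - g x (X x) (Z x) + \<eta> x (X x) * \<eta> x (Z x)) -
        \<eta> x (Z x) * (- g x (NN X x) (Y x) - g x (X x) (Y x) + \<eta> x (X x) * \<eta> x (Y x))"
        using alpha[OF Z Y X, of x] flips by (simp add: algebra_simps)
      show "AA (\<lambda>y. F y (X y)) (\<lambda>y. F y (Y y)) (Z x) x - AA (\<lambda>y. F y (Y y)) (\<lambda>y. F y (X y)) (Z x) x =
        AA Z X (Y x) x + \<eta> x (Y x) * (- g x (NN X x) (Z x) - g x (X x) (Z x) + \<eta> x (Z x) * \<eta> x (X x)) -
        \<eta> x (X x) * (- g x (NN Y x) (Z x) - g x (Y x) (Z x) + \<eta> x (Z x) * \<eta> x (Y x))"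
        using alpha[OF X Y Z, of x] flips by (simp add: algebra_simps)
      show "AA (\<lambda>y. F y (X y)) (\<lambda>y. F y (Y y)) (Z x) x + AA (\<lambda>y. F y (X y)) (\<lambda>y. F y (Z y)) (Y x) x =
        (g x (X x) (Z x) - \<eta> x (X x) * \<eta> x (Z x) - g x (NN X x) (Z x)) * \<eta> x (Y x) +
        \<eta> x (Z x) * (g x (X x) (Y x) - \<eta> x (X x) * \<eta> x (Y x) - g x (NN X x) (Y x))"
        using beta[OF X Y Z, of x] flips by (simp add: algebra_simps)
      show "AA (\<lambda>y. F y (Z y)) (\<lambda>y. F y (X y)) (Y x) x + AA (\<lambda>y. F y (Z y)) (\<lambda>y. F y (Y y)) (X x) x =
        (g x (Y x) (Z x) - \<eta> x (Z x) * \<eta> x (Y x) - g x (NN Y x) (Z x)) * \<eta> x (X x) +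
        \<eta> x (Y x) * (g x (X x) (Z x) - \<eta> x (Z x) * \<eta> x (X x) - g x (NN X x) (Z x))"
        using beta[OF Z X Y, of x] flips by (simp add: algebra_simps)
      show "AA (\<lambda>y. F y (Y y)) (\<lambda>y. F y (Z y)) (X x) x + AA (\<lambda>y. F y (Y y)) (\<lambda>y. F y (X y)) (Z x) x =
        (g x (X x) (Y x) - \<eta> x (Y x) * \<eta> x (X x) - g x (NN X x) (Y x)) * \<eta> x (Z x) +
        \<eta> x (X x) * (g x (Y x) (Z x) - \<eta> x (Y x) * \<eta> x (Z x) - g x (NN Y x) (Z x))"
        using beta[OF Y Z X, of x] flips by (simp add: algebra_simps)
      show "AA X Z (Y x) x = - AA X Y (Z x) x" using P1[OF X Z Y] .
      show "AA Y X (Z x) x = - AA Y Z (X x) x" using P1[OF Y X Z] .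
      show "AA Z Y (X x) x = - AA Z X (Y x) x" using P1[OF Z Y X] .
      show "AA X Y (Z x) x + AA Y Z (X x) x + AA Z X (Y x) x = 0" using P2[OF X Y Z] .
    qed
    have lhs: "g x ?w (Z x) = AA X Y (Z x) x + AA (\<lambda>y. F y (X y)) (\<lambda>y. F y (Y y)) (Z x) x
       - (2 * g x (X x) (Y x) * \<eta> x (Z x) - \<eta> x (Y x) * (g x (X x) (Z x) + g x (NN X x) (Z x) + \<eta> x (X x) * \<eta> x (Z x)))"
    proof -
      have xz: "g x (\<xi> x) (Z x) = \<eta> x (Z x)" using eg'[of "Z x" x] Z by simp
      show ?thesis using X Y Z FX FY by (simp add: gadd1 gdiff1 gscale1 xz)
    qed
    show ?thesis unfolding lhs key by simp
  qed
  hence "?w = 0" using nondeg[OF wE] by blast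
  thus ?thesis by simp
qed

end

context CR begin

lemma tens0:
  assumes s: "s \<in> \<Gamma>" and s0: "s x = 0"
  shows "NN s x = 0"
proof -
  obtain k e and \<theta> :: "nat \<Rightarrow> 'm \<Rightarrow> 'v \<Rightarrow> real" where
    kt: "\<forall>i<k. e i \<in> \<Gamma> \<and> (\<forall>x. lin_on (E x) (\<theta> i x)) \<and> (\<forall>s\<in>\<Gamma>. fapp (\<theta> i) s \<in> C)"
    and rep: "\<forall>s\<in>\<Gamma>. s = (\<lambda>x. \<Sum>i<k. \<theta> i x (s x) *\<^sub>R e i x)"
    using ftype by blast
  define P where "P m = (\<lambda>y. \<Sum>i<m. \<theta> i y (s y) *\<^sub>R e i y)" for m
  have thC: "(\<lambda>y. \<theta> i y (s y)) \<in> C" if "i < k" for i using kt that s unfolding fapp_def by blast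
  have eG: "e i \<in> \<Gamma>" if "i < k" for i using kt that by blast
  have T0: "NN (\<lambda>y. 0) x = 0"
    using N_scale[of "\<lambda>y. 0" "\<lambda>y. 0" x] by simp
  have PS: "P (Suc m) = (\<lambda>y. P m y + \<theta> m y (s y) *\<^sub>R e m y)" for m
    unfolding P_def by simp
  have "m \<le> k \<Longrightarrow> P m \<in> \<Gamma> \<and> NN (P m) x = (\<Sum>i<m. \<theta> i x (s x) *\<^sub>R NN (e i) x)" for m
  proof (induction m)
    case 0
    then show ?case unfolding P_def using T0 by simp
  next
    case (Suc m)
    hence IH: "P m \<in> \<Gamma>" "NN (P m) x = (\<Sum>i<m. \<theta> i x (s x) *\<^sub>R NN (e i) x)" and mk: "m < k" by auto
    have sm: "(\<lambda>y. \<theta> m y (s y) *\<^sub>R e m y) \<in> \<Gamma>" using thC[OF mk] eG[OF mk] by simp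
    have "NN (P (Suc m)) x = NN (P m) x + NN (\<lambda>y. \<theta> m y (s y) *\<^sub>R e m y) x"
      unfolding PS using N_add[OF IH(1) sm] .
    also have "NN (\<lambda>y. \<theta> m y (s y) *\<^sub>R e m y) x = \<theta> m x (s x) *\<^sub>R NN (e m) x"
      using N_scale[OF thC[OF mk] eG[OF mk]] .
    finally show ?case using IH sm unfolding PS by simp
  qed
  hence "NN (P k) x = (\<Sum>i<k. \<theta> i x (s x) *\<^sub>R NN (e i) x)" by simp
  moreover have "P k = s" using rep s unfolding P_def by metis
  moreover have "\<theta> i x (s x) = 0" if "i < k" for i
    using lin_onD[of "E x" "\<theta> i x" 0 0 1] kt that subE s0 by simp
  ultimately show ?thesis by simp
qed

lemma tens:
  assumes s: "s \<in> \<Gamma>" and t: "t \<in> \<Gamma>" and st: "s x = t x"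
  shows "NN s x = NN t x"
proof -
  have mt: "(\<lambda>y. (-1) *\<^sub>R t y) \<in> \<Gamma>" using t by (rule Gcsm)
  have w: "(\<lambda>y. s y + (-1) *\<^sub>R t y) \<in> \<Gamma>" using s t by simp
  have "NN (\<lambda>y. s y + (-1) *\<^sub>R t y) x = 0"
    using tens0[OF w] st by simp
  moreover have "NN (\<lambda>y. s y + (-1) *\<^sub>R t y) x = NN s x - NN t x"
    using N_add[OF s mt, of x] N_scale[of "\<lambda>y. -1" t x] t by simp
  ultimately show ?thesis by simp
qed

lemma pwN: assumes s: "s \<in> \<Gamma>" shows "pw \<Gamma> NN x (s x) = NN s x"
proof -
  let ?t = "SOME t. t \<in> \<Gamma> \<and> t x = s x"
  have "\<exists>t. t \<in> \<Gamma> \<and> t x = s x" using s by blast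
  hence t: "?t \<in> \<Gamma> \<and> ?t x = s x" by (rule someI_ex)
  have "NN ?t x = NN s x"
    using t s by (intro tens) simp_all
  thus ?thesis unfolding pw_def by simp
qed

lemma pw_props: assumes v: "v \<in> E x"
  shows "pw \<Gamma> NN x v \<in> E x" and "pw \<Gamma> NN x (F x v) = - F x (pw \<Gamma> NN x v)"
    and "\<eta> x (pw \<Gamma> NN x v) = 0"
proof -
  obtain s where s: "s \<in> \<Gamma>" "s x = v" using Gsurj[OF v] by blast
  have FS: "(\<lambda>y. F y (s y)) \<in> \<Gamma>" using s by simp
  show "pw \<Gamma> NN x v \<in> E x" unfolding s(2)[symmetric] pwN[OF s(1)] using s by simp
  show "pw \<Gamma> NN x (F x v) = - F x (pw \<Gamma> NN x v)"
    unfolding s(2)[symmetric] using pwN[OF FS, of x] pwN[OF s(1), of x] FN[OF s(1), of x] by simp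
  show "\<eta> x (pw \<Gamma> NN x v) = 0" unfolding s(2)[symmetric] pwN[OF s(1)] using eN s by simp
qed

lemma pw_xi: "pw \<Gamma> NN x (\<xi> x) = 0"
  using pwN[OF xiG, of x] N_xi by simp

lemma pw_lin: "lin_on (E x) (pw \<Gamma> NN x)"
  unfolding lin_on_def
proof (intro ballI allI)
  fix u v a assume u: "u \<in> E x" and v: "v \<in> E x"
  obtain su where su: "su \<in> \<Gamma>" "su x = u" using Gsurj[OF u] by blast
  obtain sv where sv: "sv \<in> \<Gamma>" "sv x = v" using Gsurj[OF v] by blast
  have w: "(\<lambda>y. a *\<^sub>R su y + sv y) \<in> \<Gamma>" using su sv by simp
  have "pw \<Gamma> NN x (a *\<^sub>R u + v) = NN (\<lambda>y. a *\<^sub>R su y + sv y) x"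
    unfolding su(2)[symmetric] sv(2)[symmetric] using pwN[OF w, of x] by simp
  also have "\<dots> = a *\<^sub>R NN su x + NN sv x"
    using su sv N_add[of "\<lambda>y. a *\<^sub>R su y" sv x] N_scale[of "\<lambda>y. a" su x] by simp
  finally show "pw \<Gamma> NN x (a *\<^sub>R u + v) = a *\<^sub>R pw \<Gamma> NN x u + pw \<Gamma> NN x v"
    unfolding su(2)[symmetric] sv(2)[symmetric] using pwN[OF su(1), of x] pwN[OF sv(1), of x] by simp
qed

lemma J_lin: "lin_on (E x) (\<lambda>v. F x v + \<eta> x v *\<^sub>R \<xi> x)"
  unfolding lin_on_def by (simp add: Fadd Fscale eadd escale algebra_simps)
lemma K_lin: "lin_on (E x) (\<lambda>v. - F x v + \<eta> x v *\<^sub>R \<xi> x)"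
  unfolding lin_on_def by (simp add: Fadd Fscale eadd escale algebra_simps)

lemma trace1: "fiber_trace (E x) (pw \<Gamma> NN x) = 0"
proof (rule trace_zero[OF subE])
  show "real_vector.dim (E x) = Suc (2*n)" using dimE by simp
  show "lin_on (E x) (pw \<Gamma> NN x)" by (rule pw_lin)
  show "lin_on (E x) (\<lambda>v. F x v + \<eta> x v *\<^sub>R \<xi> x)" by (rule J_lin)
  show "lin_on (E x) (\<lambda>v. - F x v + \<eta> x v *\<^sub>R \<xi> x)" by (rule K_lin)
  fix v assume v: "v \<in> E x"
  show "pw \<Gamma> NN x v \<in> E x" using pw_props(1)[OF v] .
  show "F x v + \<eta> x v *\<^sub>R \<xi> x \<in> E x" using v by simp
  show "- F x v + \<eta> x v *\<^sub>R \<xi> x \<in> E x" using v by simp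
  show "F x (- F x v + \<eta> x v *\<^sub>R \<xi> x) + \<eta> x (- F x v + \<eta> x v *\<^sub>R \<xi> x) *\<^sub>R \<xi> x = v"
    using v by (simp add: Fadd Fneg Fscale Fdiff eadd eneg escale ediff FF)
  show "- F x (F x v + \<eta> x v *\<^sub>R \<xi> x) + \<eta> x (F x v + \<eta> x v *\<^sub>R \<xi> x) *\<^sub>R \<xi> x = v"
    using v by (simp add: Fadd Fneg Fscale Fdiff eadd eneg escale ediff FF)
  have l: "pw \<Gamma> NN x (F x v + \<eta> x v *\<^sub>R \<xi> x) = pw \<Gamma> NN x (F x v) + \<eta> x v *\<^sub>R pw \<Gamma> NN x (\<xi> x)"
  proof -
    have l1: "pw \<Gamma> NN x (F x v + \<eta> x v *\<^sub>R \<xi> x) = pw \<Gamma> NN x (F x v) + pw \<Gamma> NN x (\<eta> x v *\<^sub>R \<xi> x)"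
      using lin_onD[OF pw_lin[of x] subE[of x], of "F x v" "\<eta> x v *\<^sub>R \<xi> x"] v by simp
    have l2: "pw \<Gamma> NN x (\<eta> x v *\<^sub>R \<xi> x) = \<eta> x v *\<^sub>R pw \<Gamma> NN x (\<xi> x)"
      using lin_onD[OF pw_lin[of x] subE[of x], of "\<xi> x" "\<xi> x" "\<eta> x v"] by simp
    show ?thesis using l1 l2 by simp
  qed
  show "pw \<Gamma> NN x (F x v + \<eta> x v *\<^sub>R \<xi> x) = - (F x (pw \<Gamma> NN x v) + \<eta> x (pw \<Gamma> NN x v) *\<^sub>R \<xi> x)"
    unfolding l pw_xi using pw_props[OF v] by simp
qed

lemma trace2: "fiber_trace (E x) (pw \<Gamma> NN x \<circ> F x) = 0"
proof (rule trace_zero[OF subE])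
  show "real_vector.dim (E x) = Suc (2*n)" using dimE by simp
  show "lin_on (E x) (pw \<Gamma> NN x \<circ> F x)"
    unfolding lin_on_def comp_def
    using lin_onD[OF pw_lin subE] by (simp add: Fadd Fscale)
  show "lin_on (E x) (\<lambda>v. F x v + \<eta> x v *\<^sub>R \<xi> x)" by (rule J_lin)
  show "lin_on (E x) (\<lambda>v. - F x v + \<eta> x v *\<^sub>R \<xi> x)" by (rule K_lin)
  fix v assume v: "v \<in> E x"
  show "(pw \<Gamma> NN x \<circ> F x) v \<in> E x" using pw_props(1)[of "F x v"] v by simp
  show "F x v + \<eta> x v *\<^sub>R \<xi> x \<in> E x" using v by simp
  show "- F x v + \<eta> x v *\<^sub>R \<xi> x \<in> E x" using v by simp
  show "F x (- F x v + \<eta> x v *\<^sub>R \<xi> x) + \<eta> x (- F x v + \<eta> x v *\<^sub>R \<xi> x) *\<^sub>R \<xi> x = v"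
    using v by (simp add: Fadd Fneg Fscale Fdiff eadd eneg escale ediff FF)
  show "- F x (F x v + \<eta> x v *\<^sub>R \<xi> x) + \<eta> x (F x v + \<eta> x v *\<^sub>R \<xi> x) *\<^sub>R \<xi> x = v"
    using v by (simp add: Fadd Fneg Fscale Fdiff eadd eneg escale ediff FF)
  have FJ: "F x (F x v + \<eta> x v *\<^sub>R \<xi> x) = F x (F x v)" using v by (simp add: Fadd Fscale)
  have Fv: "F x v \<in> E x" using v by simp
  have "(pw \<Gamma> NN x \<circ> F x) (F x v + \<eta> x v *\<^sub>R \<xi> x) = - F x (pw \<Gamma> NN x (F x v))"
    unfolding comp_def FJ using pw_props(2)[OF Fv] .
  moreover have "\<eta> x (pw \<Gamma> NN x (F x v)) = 0" using pw_props(3)[OF Fv] .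
  ultimately show "(pw \<Gamma> NN x \<circ> F x) (F x v + \<eta> x v *\<^sub>R \<xi> x)
     = - (F x ((pw \<Gamma> NN x \<circ> F x) v) + \<eta> x ((pw \<Gamma> NN x \<circ> F x) v) *\<^sub>R \<xi> x)"
    by simp
qed

lemma main:
  shows "\<forall>s\<in>\<Gamma>. \<forall>s1\<in>\<Gamma>. \<forall>s2\<in>\<Gamma>.
      (\<lambda>x. g x (N3 br F \<xi> s1 x) (s2 x)) = (\<lambda>x. g x (s1 x) (N3 br F \<xi> s2 x))
    \<and> nab s \<xi> = (\<lambda>x. - F x (s x) - F x (N3 br F \<xi> s x))
    \<and> fapp F (N3 br F \<xi> s) = (\<lambda>x. - N3 br F \<xi> (fapp F s) x)
    \<and> (\<forall>x. fiber_trace (E x) (pw \<Gamma> (N3 br F \<xi>) x) = 0)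
    \<and> (\<forall>x. fiber_trace (E x) (pw \<Gamma> (N3 br F \<xi>) x \<circ> F x) = 0)
    \<and> N3 br F \<xi> \<xi> = (\<lambda>x. 0)
    \<and> (\<forall>x. \<eta> x (N3 br F \<xi> s x) = 0)
    \<and> (\<lambda>x. covF nab F s1 s2 x + covF nab F (fapp F s1) (fapp F s2) x)
        = (\<lambda>x. (2 * g x (s1 x) (s2 x)) *\<^sub>R \<xi> x
               - \<eta> x (s2 x) *\<^sub>R (s1 x + N3 br F \<xi> s1 x + \<eta> x (s1 x) *\<^sub>R \<xi> x))"
proof (intro ballI conjI allI)
  fix s s1 s2 x assume s: "s \<in> \<Gamma>" and s1: "s1 \<in> \<Gamma>" and s2: "s2 \<in> \<Gamma>"
  show "(\<lambda>x. g x (NN s1 x) (s2 x)) = (\<lambda>x. g x (s1 x) (NN s2 x))"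
    using N_sym[OF s1 s2] by simp
  show "nab s \<xi> = (\<lambda>x. - F x (s x) - F x (NN s x))"
    using nab_xi_pt[OF s] by (simp add: fun_eq_iff)
  show "fapp F (NN s) = (\<lambda>x. - NN (fapp F s) x)"
    unfolding fapp_def using FN[OF s] by (simp add: fun_eq_iff)
  show "fiber_trace (E x) (pw \<Gamma> NN x) = 0" by (rule trace1)
  show "fiber_trace (E x) (pw \<Gamma> NN x \<circ> F x) = 0" by (rule trace2)
  show "NN \<xi> = (\<lambda>x. 0)" by (rule N_xi)
  show "\<eta> x (NN s x) = 0" using eN[OF s] .
  show "(\<lambda>x. covF nab F s1 s2 x + covF nab F (fapp F s1) (fapp F s2) x)
        = (\<lambda>x. (2 * g x (s1 x) (s2 x)) *\<^sub>R \<xi> x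
               - \<eta> x (s2 x) *\<^sub>R (s1 x + NN s1 x + \<eta> x (s1 x) *\<^sub>R \<xi> x))"
    unfolding fapp_def using item5_pt[OF s1 s2] by (simp add: fun_eq_iff)
qed

end

theorem proposition4p4:
  fixes E :: "'m \<Rightarrow> 'v::real_vector set" and C :: "('m \<Rightarrow> real) set"
    and \<Gamma> :: "('m \<Rightarrow> 'v) set" and \<rho> :: "('m \<Rightarrow> 'v) \<Rightarrow> ('m \<Rightarrow> real) \<Rightarrow> ('m \<Rightarrow> real)"
    and br :: "('m \<Rightarrow> 'v) \<Rightarrow> ('m \<Rightarrow> 'v) \<Rightarrow> ('m \<Rightarrow> 'v)" and n :: nat
    and F :: "'m \<Rightarrow> 'v \<Rightarrow> 'v" and \<xi> :: "'m \<Rightarrow> 'v" and \<eta> :: "'m \<Rightarrow> 'v \<Rightarrow> real"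
    and g :: "'m \<Rightarrow> 'v \<Rightarrow> 'v \<Rightarrow> real"
    and nab :: "('m \<Rightarrow> 'v) \<Rightarrow> ('m \<Rightarrow> 'v) \<Rightarrow> ('m \<Rightarrow> 'v)"
  assumes "contact_riemannian_lie_algebroid E C \<Gamma> \<rho> br n F \<xi> \<eta> g"
    and "levi_civita C \<Gamma> \<rho> br g nab"
  shows "\<forall>s\<in>\<Gamma>. \<forall>s1\<in>\<Gamma>. \<forall>s2\<in>\<Gamma>.
      (\<lambda>x. g x (N3 br F \<xi> s1 x) (s2 x)) = (\<lambda>x. g x (s1 x) (N3 br F \<xi> s2 x))
    \<and> nab s \<xi> = (\<lambda>x. - F x (s x) - F x (N3 br F \<xi> s x))
    \<and> fapp F (N3 br F \<xi> s) = (\<lambda>x. - N3 br F \<xi> (fapp F s) x)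
    \<and> (\<forall>x. fiber_trace (E x) (pw \<Gamma> (N3 br F \<xi>) x) = 0)
    \<and> (\<forall>x. fiber_trace (E x) (pw \<Gamma> (N3 br F \<xi>) x \<circ> F x) = 0)
    \<and> N3 br F \<xi> \<xi> = (\<lambda>x. 0)
    \<and> (\<forall>x. \<eta> x (N3 br F \<xi> s x) = 0)
    \<and> (\<lambda>x. covF nab F s1 s2 x + covF nab F (fapp F s1) (fapp F s2) x)
        = (\<lambda>x. (2 * g x (s1 x) (s2 x)) *\<^sub>R \<xi> x
               - \<eta> x (s2 x) *\<^sub>R (s1 x + N3 br F \<xi> s1 x + \<eta> x (s1 x) *\<^sub>R \<xi> x))"
proof -
  interpret CR E C \<Gamma> \<rho> br n F \<xi> \<eta> g nab using assms by unfold_locales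
  show ?thesis by (rule main)
qed


end
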